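(* Let $F$ be a field of characteristic different from $2$ and $3$, let $A$ be the free associative $F$-algebra without unity on free generators $x,y$, let $I$ be the two-sided ideal of $A$ generated by the following elements: (i) all monomials of degree $8$; (ii) all monomials of degree greater than $2$ in $x$; (iii) all monic monomials of degree $7$ except $yxy^3xy$ and $y^2xyxy^2$; (iv) all monic monomials of degree less than $7$ which do not divide either of the monomials $yxy^3xy$ and $y^2xyxy^2$; (v) the polynomial $2xy^3xy-5yxyxy^2-2yxy^3x+5y^2xyxy$; (vi) the polynomial $2yxy^3xy-5y^2xyxy^2$; let $B=A/I$, and let $B_1=F\oplus B$ be the unital hull of $B$. Then the Lie algebra $[B_1]$ is $5$-Engel but the group of units $U(B_1)$ is not $5$-Engel.
   Context: For monic monomials $m,n$ in $x,y$, $m$ divides $n$ if $n=m_1 m m_2$ for some monic monomials $m_1,m_2$ (possibly equal to $1$). The unital hull $B_1=F\oplus B$ is the direct sum of vector spaces with multiplication $(\lambda+u)(\mu+v)=\lambda\mu+(\lambda v+\mu u+uv)$, so $1\in F$ is its unity. For an associative algebra $R$, $[R]$ is the Lie algebra with bracket $[a,b]=ab-ba$ and $U(R)$ is its group of units. Set $[x,{}_{(1)}y]=[x,y]$, $[x,{}_{(k+1)}y]=[[x,{}_{(k)}y],y]$; a Lie algebra is $n$-Engel if $[u,{}_{(n)}v]=0$ for all $u,v$. For a group, $(x,y)=x^{-1}y^{-1}xy$, $(x,{}_{(k+1)}y)=((x,{}_{(k)}y),y)$; a group is $n$-Engel if $(u,{}_{(n)}v)=1$ for all $u,v$. *)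

theory Defs
  imports "HOL-Algebra.Ring"
begin

datatype gen = X | Y

text \<open>A noncommutative polynomial over F is a coefficient function on words
  (monic monomials) in the letters X, Y; the empty word is the monomial 1.\<close>
type_synonym 'a ncpoly = "gen list \<Rightarrow> 'a"

definition ncp_zero :: "'a::field ncpoly" where
  "ncp_zero = (\<lambda>w. 0)"

definition ncp_add :: "'a::field ncpoly \<Rightarrow> 'a ncpoly \<Rightarrow> 'a ncpoly" where
  "ncp_add p q = (\<lambda>w. p w + q w)"

definition ncp_smult :: "'a::field \<Rightarrow> 'a ncpoly \<Rightarrow> 'a ncpoly" where
  "ncp_smult c p = (\<lambda>w. c * p w)"

definition ncp_mult :: "'a::field ncpoly \<Rightarrow> 'a ncpoly \<Rightarrow> 'a ncpoly" where
  "ncp_mult p q = (\<lambda>w. \<Sum>i\<le>length w. p (take i w) * q (drop i w))"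

definition mono :: "gen list \<Rightarrow> 'a::field ncpoly" where
  "mono u = (\<lambda>w. if w = u then 1 else 0)"

definition free_alg :: "'a::field ncpoly set" where
  "free_alg = {p. finite {w. p w \<noteq> 0} \<and> p [] = 0}"

inductive_set ideal_gen :: "'a::field ncpoly set \<Rightarrow> 'a ncpoly set" for G where
  gen: "g \<in> G \<Longrightarrow> g \<in> ideal_gen G"
| zero: "ncp_zero \<in> ideal_gen G"
| add: "p \<in> ideal_gen G \<Longrightarrow> q \<in> ideal_gen G \<Longrightarrow> ncp_add p q \<in> ideal_gen G"
| smult: "p \<in> ideal_gen G \<Longrightarrow> ncp_smult c p \<in> ideal_gen G"
| lmult: "p \<in> ideal_gen G \<Longrightarrow> a \<in> free_alg \<Longrightarrow> ncp_mult a p \<in> ideal_gen G"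
| rmult: "p \<in> ideal_gen G \<Longrightarrow> a \<in> free_alg \<Longrightarrow> ncp_mult p a \<in> ideal_gen G"

definition mdvd :: "gen list \<Rightarrow> gen list \<Rightarrow> bool" where
  "mdvd m n \<longleftrightarrow> (\<exists>m1 m2. n = m1 @ m @ m2)"

definition w1 :: "gen list" where "w1 = [Y, X, Y, Y, Y, X, Y]"
definition w2 :: "gen list" where "w2 = [Y, Y, X, Y, X, Y, Y]"

definition rel_v :: "'a::field ncpoly" where
  "rel_v = (\<lambda>w. 2 * mono [X, Y, Y, Y, X, Y] w - 5 * mono [Y, X, Y, X, Y, Y] w
              - 2 * mono [Y, X, Y, Y, Y, X] w + 5 * mono [Y, Y, X, Y, X, Y] w)"

definition rel_vi :: "'a::field ncpoly" where
  "rel_vi = (\<lambda>w. 2 * mono w1 w - 5 * mono w2 w)"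

definition gens :: "'a::field ncpoly set" where
  "gens =
     {mono w | w. length w = 8}
   \<union> {mono w | w. length (filter (\<lambda>g. g = X) w) > 2}
   \<union> {mono w | w. length w = 7 \<and> w \<noteq> w1 \<and> w \<noteq> w2}
   \<union> {mono w | w. 1 \<le> length w \<and> length w < 7 \<and> \<not> mdvd w w1 \<and> \<not> mdvd w w2}
   \<union> {rel_v, rel_vi}"

definition I_ideal :: "'a::field ncpoly set" where
  "I_ideal = ideal_gen gens"

text \<open>Representatives: pairs (lambda, p) with p in A; (lambda, p) represents lambda + (p + I).\<close>
definition hull_reps :: "('a::field \<times> 'a ncpoly) set" where
  "hull_reps = UNIV \<times> free_alg"

definition hull_rel :: "(('a::field \<times> 'a ncpoly) \<times> ('a \<times> 'a ncpoly)) set" where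
  "hull_rel = {(r, s). r \<in> hull_reps \<and> s \<in> hull_reps \<and> fst r = fst s
                 \<and> ncp_add (snd r) (ncp_smult (-1) (snd s)) \<in> I_ideal}"

definition hull_add :: "'a::field \<times> 'a ncpoly \<Rightarrow> 'a \<times> 'a ncpoly \<Rightarrow> 'a \<times> 'a ncpoly" where
  "hull_add r s = (fst r + fst s, ncp_add (snd r) (snd s))"

text \<open>(lambda + u)(mu + v) = lambda mu + (lambda v + mu u + u v)\<close>
definition hull_mult :: "'a::field \<times> 'a ncpoly \<Rightarrow> 'a \<times> 'a ncpoly \<Rightarrow> 'a \<times> 'a ncpoly" where
  "hull_mult r s = (fst r * fst s,
     ncp_add (ncp_add (ncp_smult (fst r) (snd s)) (ncp_smult (fst s) (snd r)))
             (ncp_mult (snd r) (snd s)))"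

definition B1 :: "('a::field \<times> 'a ncpoly) set ring" where
  "B1 = \<lparr> carrier = hull_reps // hull_rel,
          mult = (\<lambda>U V. \<Union>r\<in>U. \<Union>s\<in>V. hull_rel `` {hull_mult r s}),
          one = hull_rel `` {(1, ncp_zero)},
          zero = hull_rel `` {(0, ncp_zero)},
          add = (\<lambda>U V. \<Union>r\<in>U. \<Union>s\<in>V. hull_rel `` {hull_add r s}) \<rparr>"

definition lie_bracket :: "('b, 'm) ring_scheme \<Rightarrow> 'b \<Rightarrow> 'b \<Rightarrow> 'b" where
  "lie_bracket R a b = (a \<otimes>\<^bsub>R\<^esub> b) \<ominus>\<^bsub>R\<^esub> (b \<otimes>\<^bsub>R\<^esub> a)"

fun lie_iter :: "('b, 'm) ring_scheme \<Rightarrow> nat \<Rightarrow> 'b \<Rightarrow> 'b \<Rightarrow> 'b" where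
  "lie_iter R 0 a b = a"
| "lie_iter R (Suc k) a b = lie_bracket R (lie_iter R k a b) b"

definition lie_engel :: "('b, 'm) ring_scheme \<Rightarrow> nat \<Rightarrow> bool" where
  "lie_engel R n \<longleftrightarrow> (\<forall>u\<in>carrier R. \<forall>v\<in>carrier R. lie_iter R n u v = \<zero>\<^bsub>R\<^esub>)"

definition grp_comm :: "('b, 'm) monoid_scheme \<Rightarrow> 'b \<Rightarrow> 'b \<Rightarrow> 'b" where
  "grp_comm G a b = inv\<^bsub>G\<^esub> a \<otimes>\<^bsub>G\<^esub> inv\<^bsub>G\<^esub> b \<otimes>\<^bsub>G\<^esub> a \<otimes>\<^bsub>G\<^esub> b"

fun grp_comm_iter :: "('b, 'm) monoid_scheme \<Rightarrow> nat \<Rightarrow> 'b \<Rightarrow> 'b \<Rightarrow> 'b" where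
  "grp_comm_iter G 0 a b = a"
| "grp_comm_iter G (Suc k) a b = grp_comm G (grp_comm_iter G k a b) b"

definition group_engel :: "('b, 'm) monoid_scheme \<Rightarrow> nat \<Rightarrow> bool" where
  "group_engel G n \<longleftrightarrow> (\<forall>u\<in>carrier G. \<forall>v\<in>carrier G. grp_comm_iter G n u v = \<one>\<^bsub>G\<^esub>)"

end

theory Submission
  imports Defs
begin

lemma ncp_mult_Nil[simp]: "ncp_mult a b [] = a [] * b []"
  by (simp add: ncp_mult_def)

lemma ncp_mult_Cons: "ncp_mult a b (c # w) = a [] * b (c # w) + ncp_mult (\<lambda>u. a (c # u)) b w"
  unfolding ncp_mult_def length_Cons by (subst sum.atMost_Suc_shift) simp

lemma ncp_mult_add_left: "ncp_mult (\<lambda>w. a w + b w) c = (\<lambda>w. ncp_mult a c w + ncp_mult b c w)"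
  by (rule ext) (simp add: ncp_mult_def distrib_right sum.distrib)
lemma ncp_mult_add_right: "ncp_mult c (\<lambda>w. a w + b w) = (\<lambda>w. ncp_mult c a w + ncp_mult c b w)"
  by (rule ext) (simp add: ncp_mult_def distrib_left sum.distrib)
lemma ncp_mult_smult_left: "ncp_mult (\<lambda>w. k * a w) c = (\<lambda>w. k * ncp_mult a c w)"
  by (rule ext) (simp add: ncp_mult_def sum_distrib_left mult.assoc)
lemma ncp_mult_smult_right: "ncp_mult c (\<lambda>w. k * a w) = (\<lambda>w. k * ncp_mult c a w)"
  by (rule ext) (simp add: ncp_mult_def sum_distrib_left algebra_simps)

lemma ncp_mult_assoc_pt: "ncp_mult (ncp_mult a b) d w = ncp_mult a (ncp_mult b d) w"
proof (induction w arbitrary: a)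
  case Nil
  then show ?case by simp
next
  case (Cons c w)
  have sh: "(\<lambda>u. ncp_mult a b (c # u)) = (\<lambda>u. a [] * b (c # u) + ncp_mult (\<lambda>u. a (c # u)) b u)"
    by (simp add: ncp_mult_Cons)
  have "ncp_mult (ncp_mult a b) d (c # w) = a [] * b [] * d (c # w) +
     ncp_mult (\<lambda>u. a [] * b (c # u) + ncp_mult (\<lambda>u. a (c # u)) b u) d w"
    by (simp add: ncp_mult_Cons sh)
  also have "\<dots> = a [] * b [] * d (c # w) + a [] * ncp_mult (\<lambda>u. b (c # u)) d w
       + ncp_mult (ncp_mult (\<lambda>u. a (c # u)) b) d w"
    by (simp add: ncp_mult_add_left ncp_mult_smult_left)
  also have "\<dots> = ncp_mult a (ncp_mult b d) (c # w)"
    by (simp add: ncp_mult_Cons Cons.IH algebra_simps)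
  finally show ?case .
qed

lemma ncp_mult_assoc: "ncp_mult (ncp_mult a b) d = ncp_mult a (ncp_mult b d)"
  by (rule ext) (rule ncp_mult_assoc_pt)

lemma ncp_mult_zero_left[simp]: "ncp_mult (\<lambda>w. 0) b = (\<lambda>w. 0)"
  by (rule ext) (simp add: ncp_mult_def)
lemma ncp_mult_zero_right[simp]: "ncp_mult b (\<lambda>w. 0) = (\<lambda>w. 0)"
  by (rule ext) (simp add: ncp_mult_def)

definition vb :: "nat \<Rightarrow> 'a::field ncpoly \<Rightarrow> bool" where
  "vb n f \<longleftrightarrow> (\<forall>w. length w < n \<longrightarrow> f w = 0)"

lemma vb_mult: assumes "vb m a" "vb n b" shows "vb (m + n) (ncp_mult a b)"
  unfolding vb_def
proof (intro allI impI)
  fix w :: "gen list" assume l: "length w < m + n"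
  have "a (take i w) * b (drop i w) = 0" if "i \<le> length w" for i
  proof (cases "i < m")
    case True then show ?thesis using assms(1) that by (simp add: vb_def)
  next
    case False then have "length (drop i w) < n" using l that by simp
    then show ?thesis using assms(2) by (simp add: vb_def)
  qed
  then show "ncp_mult a b w = 0" by (auto simp: ncp_mult_def intro!: sum.neutral)
qed

lemma free_alg_iff: "p \<in> free_alg \<longleftrightarrow> finite {w. p w \<noteq> 0} \<and> p [] = 0"
  by (simp add: free_alg_def)

lemma free_alg_add: "p \<in> free_alg \<Longrightarrow> q \<in> free_alg \<Longrightarrow> (\<lambda>w. p w + q w) \<in> free_alg"
  unfolding free_alg_iff
  by (auto intro: finite_subset[of _ "{w. p w \<noteq> 0} \<union> {w. q w \<noteq> 0}"])
lemma free_alg_smult: "p \<in> free_alg \<Longrightarrow> (\<lambda>w. k * p w) \<in> free_alg"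
  unfolding free_alg_iff
  by (auto intro: finite_subset[of _ "{w. p w \<noteq> 0}"])
lemma free_alg_zero: "(\<lambda>w. 0) \<in> free_alg"
  unfolding free_alg_iff by simp

lemma free_alg_mult: assumes "p \<in> free_alg" "q \<in> free_alg" shows "ncp_mult p q \<in> free_alg"
proof -
  let ?P = "{w. p w \<noteq> 0}" and ?Q = "{w. q w \<noteq> 0}"
  have "{w. ncp_mult p q w \<noteq> 0} \<subseteq> (\<lambda>(u,v). u @ v) ` (?P \<times> ?Q)"
  proof
    fix w assume "w \<in> {w. ncp_mult p q w \<noteq> 0}"
    then have "(\<Sum>i\<le>length w. p (take i w) * q (drop i w)) \<noteq> 0" by (simp add: ncp_mult_def)
    then obtain i where "p (take i w) * q (drop i w) \<noteq> 0" by (meson sum.neutral)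
    then show "w \<in> (\<lambda>(u,v). u @ v) ` (?P \<times> ?Q)"
      by (intro image_eqI[of _ _ "(take i w, drop i w)"]) auto
  qed
  moreover have "finite ((\<lambda>(u,v). u @ v) ` (?P \<times> ?Q))"
    using assms by (simp add: free_alg_iff)
  ultimately show ?thesis using assms by (simp add: free_alg_iff finite_subset)
qed

lemma mono_free[simp]: "w \<noteq> [] \<Longrightarrow> (mono w :: 'a::field ncpoly) \<in> free_alg"
  unfolding free_alg_iff mono_def by simp

lemma mono_mult: "ncp_mult (mono u) (mono v) = (mono (u @ v) :: 'a::field ncpoly)"
proof (rule ext)
  fix w :: "gen list"
  show "ncp_mult (mono u) (mono v) w = (mono (u @ v) w :: 'a)"
  proof (cases "w = u @ v")
    case True
    have "(\<Sum>i\<le>length w. (mono u (take i w) :: 'a) * mono v (drop i w))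
        = (\<Sum>i\<in>{length u}. (mono u (take i w) :: 'a) * mono v (drop i w))"
    proof (rule sum.mono_neutral_right)
      show "\<forall>i\<in>{..length w} - {length u}. (mono u (take i w) :: 'a) * mono v (drop i w) = 0"
      proof
        fix i assume i: "i \<in> {..length w} - {length u}"
        then have "take i w \<noteq> u" by auto
        then show "(mono u (take i w) :: 'a) * mono v (drop i w) = 0" by (simp add: mono_def)
      qed
    qed (auto simp: True)
    also have "\<dots> = mono (u @ v) w" by (simp add: mono_def True)
    finally show ?thesis by (simp add: ncp_mult_def)
  next
    case False
    have z: "(mono u (take i w) :: 'a) * mono v (drop i w) = 0" for i
      using False by (auto simp: mono_def)
    have "ncp_mult (mono u) (mono v) w = (0::'a)"
      unfolding ncp_mult_def by (simp only: z sum.neutral_const)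
    then show ?thesis using False by (simp add: mono_def[of "u@v"])
  qed
qed

fun prefixes :: "gen list \<Rightarrow> gen list list" where
  "prefixes [] = [[]]"
| "prefixes (b # w) = [] # map ((#) b) (prefixes w)"

fun subws :: "gen list \<Rightarrow> gen list list" where
  "subws [] = [[]]"
| "subws (b # w) = prefixes (b # w) @ subws w"

lemma in_prefixes: "u \<in> set (prefixes w) \<longleftrightarrow> (\<exists>v. w = u @ v)"
proof (induction w arbitrary: u)
  case Nil then show ?case by auto
next
  case (Cons b w) then show ?case by (cases u) auto
qed

lemma mdvd_Nil: "mdvd u [] \<longleftrightarrow> u = []"
  by (auto simp: mdvd_def)

lemma mdvd_Cons: "mdvd u (b # w) \<longleftrightarrow> (\<exists>v. b # w = u @ v) \<or> mdvd u w"
proof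
  assume "mdvd u (b # w)"
  then obtain m1 m2 where e: "b # w = m1 @ u @ m2" by (auto simp: mdvd_def)
  show "(\<exists>v. b # w = u @ v) \<or> mdvd u w"
  proof (cases m1)
    case Nil then show ?thesis using e by auto
  next
    case (Cons c m1') then show ?thesis using e by (auto simp: mdvd_def)
  qed
next
  assume "(\<exists>v. b # w = u @ v) \<or> mdvd u w"
  then show "mdvd u (b # w)"
  proof
    assume "\<exists>v. b # w = u @ v" then show ?thesis unfolding mdvd_def by (metis append_Nil)
  next
    assume "mdvd u w" then obtain m1 m2 where "w = m1 @ u @ m2" by (auto simp: mdvd_def)
    then show ?thesis unfolding mdvd_def by (metis append_Cons)
  qed
qed

lemma mdvd_subws: "mdvd u w \<longleftrightarrow> u \<in> set (subws w)"
proof (induction w)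
  case Nil then show ?case by (simp add: mdvd_Nil)
next
  case (Cons b w) then show ?case by (simp add: mdvd_Cons in_prefixes del: prefixes.simps)
qed

definition good :: "gen list \<Rightarrow> bool" where
  "good w \<longleftrightarrow> w \<noteq> [] \<and> (mdvd w w1 \<or> mdvd w w2)"

definition goodlist :: "gen list list" where
  "goodlist = [[X], [Y], [X,Y], [Y,X], [Y,Y], [X,Y,X], [X,Y,Y], [Y,X,Y], [Y,Y,X], [Y,Y,Y], [X,Y,X,Y], [X,Y,Y,Y], [Y,X,Y,X], [Y,X,Y,Y], [Y,Y,X,Y], [Y,Y,Y,X], [X,Y,X,Y,Y], [X,Y,Y,Y,X], [Y,X,Y,X,Y], [Y,X,Y,Y,Y], [Y,Y,X,Y,X], [Y,Y,Y,X,Y], [X,Y,Y,Y,X,Y], [Y,X,Y,X,Y,Y], [Y,X,Y,Y,Y,X], [Y,Y,X,Y,X,Y], [Y,X,Y,Y,Y,X,Y], [Y,Y,X,Y,X,Y,Y]]"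

lemma sub1_good: "w \<in> set (subws w1) \<Longrightarrow> w = [] \<or> w \<in> set goodlist"
  unfolding w1_def goodlist_def by auto
lemma sub2_good: "w \<in> set (subws w2) \<Longrightarrow> w = [] \<or> w \<in> set goodlist"
  unfolding w2_def goodlist_def by auto
lemma good_sub: "w \<in> set goodlist \<Longrightarrow> w \<noteq> [] \<and> (w \<in> set (subws w1) \<or> w \<in> set (subws w2))"
  unfolding w1_def w2_def goodlist_def by auto

lemma good_iff: "good w \<longleftrightarrow> w \<in> set goodlist"
  using sub1_good sub2_good good_sub unfolding good_def mdvd_subws by blast

definition "ga = [X,Y,Y,Y,X,Y]"
definition "gb = [Y,X,Y,X,Y,Y]"
definition "gc = [Y,X,Y,Y,Y,X]"
definition "gd = [Y,Y,X,Y,X,Y]"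

definition Jc :: "'a::field ncpoly \<Rightarrow> bool" where
  "Jc p \<longleftrightarrow> (\<forall>w. good w \<and> length w \<le> 5 \<longrightarrow> p w = 0) \<and> p ga + p gc = 0 \<and> 5 * p ga + 2 * p gb = 0
     \<and> 5 * p ga - 2 * p gd = 0 \<and> 5 * p w1 + 2 * p w2 = 0"

lemma good_all: "good w \<Longrightarrow> list_all P goodlist \<Longrightarrow> P w"
  by (simp add: good_iff list_all_iff)
lemma good_len: "good w \<Longrightarrow> length w \<le> 7"
  by (erule good_all) (simp add: goodlist_def)
lemma good_cnt: "good w \<Longrightarrow> length (filter (\<lambda>g. g = X) w) \<le> 2"
  by (erule good_all) (simp add: goodlist_def)
lemma good6: "good w \<Longrightarrow> length w = 6 \<Longrightarrow> w = ga \<or> w = gb \<or> w = gc \<or> w = gd"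
  by (erule good_all[where P="\<lambda>w. length w = 6 \<longrightarrow> w = ga \<or> w = gb \<or> w = gc \<or> w = gd", rule_format])
     (simp add: goodlist_def ga_def gb_def gc_def gd_def)
lemma good7: "good w \<Longrightarrow> length w = 7 \<Longrightarrow> w = w1 \<or> w = w2"
  by (erule good_all[where P="\<lambda>w. length w = 7 \<longrightarrow> w = w1 \<or> w = w2", rule_format])
     (simp add: goodlist_def w1_def w2_def)
lemma good_specials: "good ga" "good gb" "good gc" "good gd" "good w1" "good w2"
  by (simp_all add: good_iff goodlist_def ga_def gb_def gc_def gd_def w1_def w2_def)
lemma good_Nil: "\<not> good []"
  by (simp add: good_def)

lemma mdvd_trans: "mdvd a b \<Longrightarrow> mdvd b c \<Longrightarrow> mdvd a c"
  unfolding mdvd_def by (metis append.assoc)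
lemma mdvd_take: "mdvd (take i w) w"
  unfolding mdvd_def by (metis append_Nil append_take_drop_id)
lemma mdvd_drop: "mdvd (drop i w) w"
  unfolding mdvd_def by (metis append_Nil2 append_take_drop_id)
lemma good_take: "good w \<Longrightarrow> take i w \<noteq> [] \<Longrightarrow> good (take i w)"
  unfolding good_def using mdvd_trans mdvd_take by blast
lemma good_drop: "good w \<Longrightarrow> drop i w \<noteq> [] \<Longrightarrow> good (drop i w)"
  unfolding good_def using mdvd_trans mdvd_drop by blast

lemma lvanish:
  fixes a p :: "'a::field ncpoly"
  assumes "a [] = 0" "p [] = 0" "\<forall>w. good w \<and> length w \<le> 5 \<longrightarrow> p w = 0" "good w" "length w \<le> 6"
  shows "ncp_mult a p w = 0"
  unfolding ncp_mult_def
proof (rule sum.neutral, intro ballI)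
  fix i assume i: "i \<in> {..length w}"
  show "a (take i w) * p (drop i w) = 0"
  proof (cases "i = 0")
    case True then show ?thesis using assms by simp
  next
    case False
    show ?thesis
    proof (cases "drop i w = []")
      case True then show ?thesis using assms by simp
    next
      case F: False
      have "good (drop i w)" using good_drop[OF assms(4) F] .
      moreover have "length (drop i w) \<le> 5" using assms(5) False by simp
      ultimately show ?thesis using assms(3) by simp
    qed
  qed
qed

lemma rvanish:
  fixes a p :: "'a::field ncpoly"
  assumes "a [] = 0" "p [] = 0" "\<forall>w. good w \<and> length w \<le> 5 \<longrightarrow> p w = 0" "good w" "length w \<le> 6"
  shows "ncp_mult p a w = 0"
  unfolding ncp_mult_def
proof (rule sum.neutral, intro ballI)
  fix i assume i: "i \<in> {..length w}"
  show "p (take i w) * a (drop i w) = 0"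
  proof (cases "take i w = []")
    case True then show ?thesis by (simp only: True assms(2) mult_zero_left)
  next
    case F: False
    show ?thesis
    proof (cases "i < length w")
      case False then have "drop i w = []" by simp
      then show ?thesis using assms by simp
    next
      case True
      have "good (take i w)" using good_take[OF assms(4) F] .
      moreover have "length (take i w) \<le> 5" using assms(5) True by simp
      ultimately show ?thesis using assms(3) by simp
    qed
  qed
qed

lemma Jc_lmult:
  fixes a p :: "'a::field ncpoly"
  assumes "a [] = 0" "p [] = 0" "Jc p"
  shows "Jc (ncp_mult a p)"
proof -
  have H: "\<forall>w. good w \<and> length w \<le> 5 \<longrightarrow> p w = 0" using assms(3) by (simp add: Jc_def)
  have H': "\<And>w. w \<in> set goodlist \<Longrightarrow> length w \<le> 5 \<Longrightarrow> p w = 0" using H by (simp add: good_iff)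
  have v: "\<And>w. good w \<Longrightarrow> length w \<le> 6 \<Longrightarrow> ncp_mult a p w = 0"
    using lvanish[of a p, OF assms(1,2) H] by blast
  have s: "ncp_mult a p ga = 0" "ncp_mult a p gb = 0" "ncp_mult a p gc = 0" "ncp_mult a p gd = 0"
    using v good_specials by (simp_all add: ga_def gb_def gc_def gd_def)
  have e1: "ncp_mult a p w1 = a [Y] * p ga"
  proof -
    have z: "p [Y,Y,Y,X,Y] = 0" "p [Y,Y,X,Y] = 0" "p [Y,X,Y] = 0" "p [X,Y] = 0" "p [Y] = 0" using H by (simp_all add: good_iff goodlist_def)
    show ?thesis unfolding w1_def ga_def
      by (simp only: ncp_mult_Cons ncp_mult_Nil z assms(1,2) mult_zero_left mult_zero_right add_0_left add_0_right)
  qed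
  have e2: "ncp_mult a p w2 = a [Y] * p gb"
  proof -
    have z: "p [X,Y,X,Y,Y] = 0" "p [Y,X,Y,Y] = 0" "p [X,Y,Y] = 0" "p [Y,Y] = 0" "p [Y] = 0" using H by (simp_all add: good_iff goodlist_def)
    show ?thesis unfolding w2_def gb_def
      by (simp only: ncp_mult_Cons ncp_mult_Nil z assms(1,2) mult_zero_left mult_zero_right add_0_left add_0_right)
  qed
  have "5 * p ga + 2 * p gb = 0" using assms(3) unfolding Jc_def by blast
  moreover have "5 * (a [Y] * p ga) + 2 * (a [Y] * p gb) = a [Y] * (5 * p ga + 2 * p gb)"
    by (simp add: algebra_simps)
  ultimately have "5 * (a [Y] * p ga) + 2 * (a [Y] * p gb) = 0" by simp
  then show ?thesis using v s e1 e2 by (simp add: Jc_def)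
qed

lemma Jc_rmult:
  fixes a p :: "'a::field ncpoly"
  assumes "a [] = 0" "p [] = 0" "Jc p"
  shows "Jc (ncp_mult p a)"
proof -
  have H: "\<forall>w. good w \<and> length w \<le> 5 \<longrightarrow> p w = 0" using assms(3) by (simp add: Jc_def)
  have H': "\<And>w. w \<in> set goodlist \<Longrightarrow> length w \<le> 5 \<Longrightarrow> p w = 0" using H by (simp add: good_iff)
  have v: "\<And>w. good w \<Longrightarrow> length w \<le> 6 \<Longrightarrow> ncp_mult p a w = 0"
    using rvanish[of a p, OF assms(1,2) H] by blast
  have s: "ncp_mult p a ga = 0" "ncp_mult p a gb = 0" "ncp_mult p a gc = 0" "ncp_mult p a gd = 0"
    using v good_specials by (simp_all add: ga_def gb_def gc_def gd_def)
  have e1: "ncp_mult p a w1 = p gc * a [Y]"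
  proof -
    have z: "p [Y] = 0" "p [Y,X] = 0" "p [Y,X,Y] = 0" "p [Y,X,Y,Y] = 0" "p [Y,X,Y,Y,Y] = 0" using H by (simp_all add: good_iff goodlist_def)
    show ?thesis unfolding w1_def gc_def
      by (simp only: ncp_mult_Cons ncp_mult_Nil z assms(1,2) mult_zero_left mult_zero_right add_0_left add_0_right)
  qed
  have e2: "ncp_mult p a w2 = p gd * a [Y]"
  proof -
    have z: "p [Y] = 0" "p [Y,Y] = 0" "p [Y,Y,X] = 0" "p [Y,Y,X,Y] = 0" "p [Y,Y,X,Y,X] = 0" using H by (simp_all add: good_iff goodlist_def)
    show ?thesis unfolding w2_def gd_def
      by (simp only: ncp_mult_Cons ncp_mult_Nil z assms(1,2) mult_zero_left mult_zero_right add_0_left add_0_right)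
  qed
  have "p ga + p gc = 0" "5 * p ga - 2 * p gd = 0" using assms(3) unfolding Jc_def by blast+
  then have "5 * p gc + 2 * p gd = 0"
  proof -
    have "5 * p gc + 2 * p gd = 5 * (p ga + p gc) - (5 * p ga - 2 * p gd)" by (simp add: algebra_simps)
    then show ?thesis using \<open>p ga + p gc = 0\<close> \<open>5 * p ga - 2 * p gd = 0\<close> by simp
  qed
  moreover have "5 * (p gc * a [Y]) + 2 * (p gd * a [Y]) = (5 * p gc + 2 * p gd) * a [Y]"
    by (simp add: algebra_simps)
  ultimately have "5 * (p gc * a [Y]) + 2 * (p gd * a [Y]) = 0" by simp
  then show ?thesis using v s e1 e2 by (simp add: Jc_def)
qed

lemma h1: "(a::'a::field) + b = 0 \<Longrightarrow> c + d = 0 \<Longrightarrow> (a + c) + (b + d) = 0"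
  by (simp add: algebra_simps)
lemma h2: "5 * (a::'a::field) + 2 * b = 0 \<Longrightarrow> 5 * c + 2 * d = 0 \<Longrightarrow> 5 * (a + c) + 2 * (b + d) = 0"
proof -
  assume "5 * a + 2 * b = 0" "5 * c + 2 * d = 0"
  moreover have "5 * (a + c) + 2 * (b + d) = (5 * a + 2 * b) + (5 * c + 2 * d)" by (simp add: algebra_simps)
  ultimately show ?thesis by simp
qed
lemma h3: "5 * (a::'a::field) - 2 * b = 0 \<Longrightarrow> 5 * c - 2 * d = 0 \<Longrightarrow> 5 * (a + c) - 2 * (b + d) = 0"
proof -
  assume "5 * a - 2 * b = 0" "5 * c - 2 * d = 0"
  moreover have "5 * (a + c) - 2 * (b + d) = (5 * a - 2 * b) + (5 * c - 2 * d)" by (simp add: algebra_simps)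
  ultimately show ?thesis by simp
qed
lemma k1: "(a::'a::field) + b = 0 \<Longrightarrow> k * a + k * b = 0"
  by (metis distrib_left mult_zero_right)
lemma k2: "5 * (a::'a::field) + 2 * b = 0 \<Longrightarrow> 5 * (k * a) + 2 * (k * b) = 0"
  by (metis (no_types, lifting) distrib_left mult.left_commute mult_zero_right)
lemma k3: "5 * (a::'a::field) - 2 * b = 0 \<Longrightarrow> 5 * (k * a) - 2 * (k * b) = 0"
  by (metis (no_types, lifting) right_diff_distrib mult.left_commute mult_zero_right)

lemma Jc_parts: assumes "Jc p"
  shows "\<forall>w. good w \<and> length w \<le> 5 \<longrightarrow> p w = 0" "p ga + p gc = 0" "5 * p ga + 2 * p gb = 0"
    "5 * p ga - 2 * p gd = 0" "5 * p w1 + 2 * p w2 = 0"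
  using assms unfolding Jc_def by blast+

lemma Jc_add: assumes "Jc p" "Jc q" shows "Jc (\<lambda>w. p w + q w)"
proof -
  note p = Jc_parts[OF assms(1)] and q = Jc_parts[OF assms(2)]
  show ?thesis unfolding Jc_def
    using p(1) q(1) h1[OF p(2) q(2)] h2[OF p(3) q(3)] h3[OF p(4) q(4)] h2[OF p(5) q(5)]
    by (intro conjI) simp_all
qed

lemma Jc_smult: assumes "Jc p" shows "Jc (\<lambda>w. k * p w)"
proof -
  note p = Jc_parts[OF assms(1)]
  show ?thesis unfolding Jc_def
    using p(1) k1[OF p(2)] k2[OF p(3)] k3[OF p(4)] k2[OF p(5)]
    by (intro conjI) simp_all
qed

lemma Jc_zero: "Jc (\<lambda>w. 0)"
  unfolding Jc_def by simp

lemma mono_Jc: assumes "\<not> good w" shows "Jc (mono w :: 'a::field ncpoly)"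
proof -
  have z: "(mono w :: 'a ncpoly) v = 0" if "good v" for v
    using assms that unfolding mono_def by (cases "v = w") simp_all
  show ?thesis unfolding Jc_def using z good_specials by simp
qed

lemma rel_v_zero: "w \<noteq> ga \<Longrightarrow> w \<noteq> gb \<Longrightarrow> w \<noteq> gc \<Longrightarrow> w \<noteq> gd \<Longrightarrow> rel_v w = (0::'a::field)"
  unfolding rel_v_def mono_def ga_def gb_def gc_def gd_def by simp
lemma rel_vi_zero: "w \<noteq> w1 \<Longrightarrow> w \<noteq> w2 \<Longrightarrow> rel_vi w = (0::'a::field)"
  unfolding rel_vi_def mono_def by simp

lemma rel_v_free: "(rel_v :: 'a::field ncpoly) \<in> free_alg"
proof -
  have "{w. (rel_v :: 'a ncpoly) w \<noteq> 0} \<subseteq> {ga, gb, gc, gd}"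
    using rel_v_zero by blast
  moreover have "(rel_v :: 'a ncpoly) [] = 0"
    by (rule rel_v_zero) (simp_all add: ga_def gb_def gc_def gd_def)
  ultimately show ?thesis unfolding free_alg_iff by (meson finite.emptyI finite.insertI finite_subset)
qed

lemma rel_vi_free: "(rel_vi :: 'a::field ncpoly) \<in> free_alg"
proof -
  have "{w. (rel_vi :: 'a ncpoly) w \<noteq> 0} \<subseteq> {w1, w2}"
    using rel_vi_zero by blast
  moreover have "(rel_vi :: 'a ncpoly) [] = 0"
    by (rule rel_vi_zero) (simp_all add: w1_def w2_def)
  ultimately show ?thesis unfolding free_alg_iff by (meson finite.emptyI finite.insertI finite_subset)
qed

lemma rel_v_vals: "rel_v ga = (2::'a::field)" "rel_v gb = (-5::'a)" "rel_v gc = (-2::'a)" "rel_v gd = (5::'a)"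
    "rel_v w1 = (0::'a)" "rel_v w2 = (0::'a)"
  by (simp_all add: rel_v_def mono_def ga_def gb_def gc_def gd_def w1_def w2_def)

lemma rel_vi_vals: "rel_vi ga = (0::'a::field)" "rel_vi gb = (0::'a)" "rel_vi gc = (0::'a)" "rel_vi gd = (0::'a)"
    "rel_vi w1 = (2::'a)" "rel_vi w2 = (-5::'a)"
  by (simp_all add: rel_vi_def mono_def ga_def gb_def gc_def gd_def w1_def w2_def)

lemma rel_short: assumes "length w \<le> 5" shows "rel_v w = (0::'a::field)" "rel_vi w = (0::'a::field)"
proof -
  have "w \<noteq> ga" "w \<noteq> gb" "w \<noteq> gc" "w \<noteq> gd" "w \<noteq> w1" "w \<noteq> w2"
    using assms by (auto simp: ga_def gb_def gc_def gd_def w1_def w2_def)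
  then show "rel_v w = (0::'a::field)" "rel_vi w = (0::'a::field)" using rel_v_zero rel_vi_zero by blast+
qed

lemma rel_v_Jc: "Jc (rel_v :: 'a::field ncpoly)"
  unfolding Jc_def using rel_short[where 'a='a] rel_v_vals[where 'a='a] by simp

lemma rel_vi_Jc: "Jc (rel_vi :: 'a::field ncpoly)"
  unfolding Jc_def using rel_short[where 'a='a] rel_vi_vals[where 'a='a] by simp

lemma gens_ok: "(g :: 'a::field ncpoly) \<in> gens \<Longrightarrow> g \<in> free_alg \<and> Jc g"
proof -
  assume "g \<in> gens"
  then consider w where "g = mono w" "w \<noteq> []" "\<not> good w" | "g = rel_v" | "g = rel_vi"
  proof (unfold gens_def, elim UnE)
    fix P assume c: "\<And>w. g = mono w \<Longrightarrow> w \<noteq> [] \<Longrightarrow> \<not> good w \<Longrightarrow> P"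
    { assume "g \<in> {mono w |w. length w = 8}"
      then obtain w where "g = mono w" "length w = 8" by auto
      then show P using c good_len by fastforce }
    { assume "g \<in> {mono w |w. 2 < length (filter (\<lambda>g. g = X) w)}"
      then obtain w where "g = mono w" "2 < length (filter (\<lambda>g. g = X) w)" by auto
      then show P using c good_cnt by fastforce }
    { assume "g \<in> {mono w |w. length w = 7 \<and> w \<noteq> w1 \<and> w \<noteq> w2}"
      then obtain w where "g = mono w" "length w = 7" "w \<noteq> w1" "w \<noteq> w2" by auto
      then show P using c good7 by fastforce }
    { assume "g \<in> {mono w |w. 1 \<le> length w \<and> length w < 7 \<and> \<not> mdvd w w1 \<and> \<not> mdvd w w2}"
      then obtain w where "g = mono w" "1 \<le> length w" "\<not> mdvd w w1" "\<not> mdvd w w2" by auto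
      then show P using c unfolding good_def by fastforce }
  qed auto
  then show ?thesis
    by cases (auto simp: mono_Jc rel_v_Jc rel_vi_Jc rel_v_free rel_vi_free)
qed

lemma I_Jc: "(p :: 'a::field ncpoly) \<in> I_ideal \<Longrightarrow> p \<in> free_alg \<and> Jc p"
  unfolding I_ideal_def
proof (induction rule: ideal_gen.induct)
  case (gen g) then show ?case by (rule gens_ok)
next
  case zero then show ?case by (simp add: ncp_zero_def free_alg_zero Jc_zero)
next
  case (add p q) then show ?case by (simp add: ncp_add_def free_alg_add Jc_add)
next
  case (smult p c) then show ?case by (simp add: ncp_smult_def free_alg_smult Jc_smult)
next
  case (lmult p a)
  have "a [] = 0" "p [] = 0" using lmult by (simp_all add: free_alg_iff)
  then show ?case using lmult free_alg_mult Jc_lmult by blast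
next
  case (rmult p a)
  have "a [] = 0" "p [] = 0" using rmult by (simp_all add: free_alg_iff)
  then show ?case using rmult free_alg_mult Jc_rmult by blast
qed

lemma gen_I: "g \<in> gens \<Longrightarrow> g \<in> I_ideal"
  unfolding I_ideal_def by (rule ideal_gen.gen)

lemma bad_mono_I: assumes "w \<noteq> []" "\<not> good w" shows "(mono w :: 'a::field ncpoly) \<in> I_ideal"
proof (cases "length w \<ge> 8")
  case True
  define u where "u = take (length w - 8) w"
  define v where "v = drop (length w - 8) w"
  have wuv: "w = u @ v" by (simp add: u_def v_def)
  have lv: "length v = 8" using True by (simp add: v_def)
  have mv: "(mono v :: 'a ncpoly) \<in> I_ideal" using lv by (intro gen_I) (auto simp: gens_def)
  show ?thesis
  proof (cases "u = []")
    case True then show ?thesis using mv wuv by simp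
  next
    case False
    have "ncp_mult (mono u) (mono v :: 'a ncpoly) \<in> I_ideal"
      using mv False unfolding I_ideal_def by (intro ideal_gen.lmult) simp_all
    then show ?thesis by (simp add: mono_mult wuv)
  qed
next
  case False
  show ?thesis
  proof (cases "length w = 7")
    case True
    then have "w \<noteq> w1" "w \<noteq> w2" using assms good_specials by auto
    then show ?thesis using True by (intro gen_I) (auto simp: gens_def)
  next
    case F7: False
    have "1 \<le> length w" "length w < 7" using assms(1) False F7 by (auto simp: Suc_le_eq)
    moreover have "\<not> mdvd w w1" "\<not> mdvd w w2" using assms unfolding good_def by auto
    ultimately show ?thesis by (intro gen_I) (auto simp: gens_def)
  qed
qed

lemma sum_I:
  assumes "finite S" "\<And>w. w \<in> S \<Longrightarrow> f w \<in> (I_ideal :: 'a::field ncpoly set)"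
  shows "(\<lambda>u. \<Sum>w\<in>S. f w u) \<in> I_ideal"
  using assms
proof (induction S rule: finite_induct)
  case empty
  then show ?case using ideal_gen.zero unfolding I_ideal_def ncp_zero_def by simp
next
  case (insert x F)
  have "ncp_add (f x) (\<lambda>u. \<Sum>w\<in>F. f w u) \<in> I_ideal"
    using insert unfolding I_ideal_def by (intro ideal_gen.add) auto
  then show ?case using insert by (simp add: ncp_add_def)
qed

lemma vanish_I:
  fixes q :: "'a::field ncpoly"
  assumes "q \<in> free_alg" "\<And>w. good w \<Longrightarrow> q w = 0"
  shows "q \<in> I_ideal"
proof -
  define S where "S = {w. q w \<noteq> 0}"
  have fS: "finite S" using assms(1) by (simp add: S_def free_alg_iff)
  have "(\<lambda>u. \<Sum>w\<in>S. ncp_smult (q w) (mono w) u) \<in> I_ideal"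
  proof (rule sum_I[OF fS])
    fix w assume "w \<in> S"
    then have "w \<noteq> []" "\<not> good w" using assms by (auto simp: S_def free_alg_iff)
    then show "ncp_smult (q w) (mono w) \<in> I_ideal"
      using bad_mono_I unfolding I_ideal_def by (intro ideal_gen.smult) auto
  qed
  moreover have "(\<lambda>u. \<Sum>w\<in>S. ncp_smult (q w) (mono w) u) = q"
  proof (rule ext)
    fix u
    have "(\<Sum>w\<in>S. ncp_smult (q w) (mono w) u) = (\<Sum>w\<in>S. if u = w then q w else 0)"
      by (rule sum.cong) (auto simp: ncp_smult_def mono_def)
    also have "\<dots> = q u" using fS by (simp add: S_def)
    finally show "(\<Sum>w\<in>S. ncp_smult (q w) (mono w) u) = q u" .
  qed
  ultimately show ?thesis by simp
qed

lemma Jc_I: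
  fixes p :: "'a::field ncpoly"
  assumes two: "(2::'a) \<noteq> 0" and pf: "p \<in> free_alg" and J: "Jc p"
  shows "p \<in> I_ideal"
proof -
  note P = Jc_parts[OF J]
  define t6 where "t6 = p ga / 2"
  define t7 where "t7 = p w1 / 2"
  define r where "r = (\<lambda>w. p w + ((- t6) * rel_v w + (- t7) * rel_vi w))"
  have rf: "r \<in> free_alg" unfolding r_def
    using pf rel_v_free rel_vi_free free_alg_add free_alg_smult by blast
  have rz: "r w = 0" if g: "good w" for w
  proof -
    have "length w \<le> 7" using good_len[OF g] .
    then consider "length w \<le> 5" | "length w = 6" | "length w = 7" by linarith
    then show ?thesis
    proof cases
      case 1 then show ?thesis using P(1) g rel_short[where 'a='a, OF 1] by (simp add: r_def)
    next
      case 2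
      then consider "w = ga" | "w = gb" | "w = gc" | "w = gd" using good6[OF g] by blast
      then show ?thesis
      proof cases
        case 1 then show ?thesis using two by (simp add: r_def rel_v_vals rel_vi_vals t6_def)
      next
        case 2 then show ?thesis using two P(3) by (simp add: r_def rel_v_vals rel_vi_vals t6_def field_simps)
      next
        case 3 then show ?thesis using two P(2) by (simp add: r_def rel_v_vals rel_vi_vals t6_def field_simps) (metis distrib_right mult_zero_left)
      next
        case 4 then show ?thesis using two P(4) by (simp add: r_def rel_v_vals rel_vi_vals t6_def field_simps)
      qed
    next
      case 3
      then consider "w = w1" | "w = w2" using good7[OF g] by blast
      then show ?thesis
      proof cases
        case 1 then show ?thesis using two by (simp add: r_def rel_v_vals rel_vi_vals t7_def)
      next
        case 2 then show ?thesis using two P(5) by (simp add: r_def rel_v_vals rel_vi_vals t7_def field_simps)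
      qed
    qed
  qed
  have rI: "r \<in> I_ideal" using vanish_I[OF rf rz] .
  have vI: "rel_v \<in> (I_ideal :: 'a ncpoly set)" "rel_vi \<in> (I_ideal :: 'a ncpoly set)"
    by (auto intro!: gen_I simp: gens_def)
  have "ncp_add r (ncp_add (ncp_smult t6 rel_v) (ncp_smult t7 rel_vi)) \<in> I_ideal"
    using rI vI unfolding I_ideal_def by (intro ideal_gen.add ideal_gen.smult) auto
  moreover have "ncp_add r (ncp_add (ncp_smult t6 rel_v) (ncp_smult t7 rel_vi)) = p"
    by (rule ext) (simp add: ncp_add_def ncp_smult_def r_def)
  ultimately show ?thesis by simp
qed

lemma I_iff:
  fixes p :: "'a::field ncpoly"
  assumes "(2::'a) \<noteq> 0"
  shows "p \<in> I_ideal \<longleftrightarrow> p \<in> free_alg \<and> Jc p"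
  using I_Jc Jc_I[OF assms] by blast

lemma I_add: "p \<in> I_ideal \<Longrightarrow> q \<in> I_ideal \<Longrightarrow> (\<lambda>w. p w + q w) \<in> (I_ideal :: 'a::field ncpoly set)"
  using ideal_gen.add[of p gens q] unfolding I_ideal_def ncp_add_def by simp
lemma I_smult: "p \<in> I_ideal \<Longrightarrow> (\<lambda>w. c * p w) \<in> (I_ideal :: 'a::field ncpoly set)"
  using ideal_gen.smult[of p gens c] unfolding I_ideal_def ncp_smult_def by simp
lemma I_zero: "(\<lambda>w. 0) \<in> (I_ideal :: 'a::field ncpoly set)"
  using ideal_gen.zero[of gens] unfolding I_ideal_def ncp_zero_def by simp
lemma I_lmult: "p \<in> I_ideal \<Longrightarrow> a \<in> free_alg \<Longrightarrow> ncp_mult a p \<in> (I_ideal :: 'a::field ncpoly set)"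
  unfolding I_ideal_def by (rule ideal_gen.lmult)
lemma I_rmult: "p \<in> I_ideal \<Longrightarrow> a \<in> free_alg \<Longrightarrow> ncp_mult p a \<in> (I_ideal :: 'a::field ncpoly set)"
  unfolding I_ideal_def by (rule ideal_gen.rmult)
lemma I_cong: "p \<in> I_ideal \<Longrightarrow> p = q \<Longrightarrow> q \<in> I_ideal" by simp

lemma ncp_mult_diff_left: "ncp_mult (\<lambda>w. a w - b w) c = (\<lambda>w. ncp_mult a c w - ncp_mult b c w)"
  by (rule ext) (simp add: ncp_mult_def left_diff_distrib sum_subtractf)
lemma ncp_mult_diff_right: "ncp_mult c (\<lambda>w. a w - b w) = (\<lambda>w. ncp_mult c a w - ncp_mult c b w)"
  by (rule ext) (simp add: ncp_mult_def right_diff_distrib sum_subtractf)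

lemma hull_rel_iff: "(r, s) \<in> hull_rel \<longleftrightarrow> r \<in> hull_reps \<and> s \<in> hull_reps \<and> fst r = fst s \<and>
    (\<lambda>w. snd r w - snd s w) \<in> I_ideal"
proof -
  have "ncp_add (snd r) (ncp_smult (-1) (snd s)) = (\<lambda>w. snd r w - snd s w)"
    by (rule ext) (simp add: ncp_add_def ncp_smult_def)
  then show ?thesis unfolding hull_rel_def by simp
qed

lemma reps_iff: "r \<in> hull_reps \<longleftrightarrow> snd r \<in> free_alg"
  by (cases r) (simp add: hull_reps_def)

lemma equiv_hull: "equiv hull_reps (hull_rel :: (('a::field \<times> 'a ncpoly) \<times> _) set)"
proof (rule equivI)
  show "refl_on hull_reps (hull_rel :: (('a \<times> 'a ncpoly) \<times> _) set)"
    by (rule refl_onI) (auto simp: hull_rel_iff I_zero)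
  show "sym (hull_rel :: (('a \<times> 'a ncpoly) \<times> _) set)"
  proof (rule symI)
    fix r s :: "'a \<times> 'a ncpoly" assume "(r, s) \<in> hull_rel"
    then have "r \<in> hull_reps" "s \<in> hull_reps" "fst r = fst s" "(\<lambda>w. snd r w - snd s w) \<in> I_ideal"
      by (auto simp: hull_rel_iff)
    moreover have "(\<lambda>w. (-1) * (snd r w - snd s w)) = (\<lambda>w. snd s w - snd r w)" by (rule ext) simp
    ultimately show "(s, r) \<in> hull_rel" unfolding hull_rel_iff using I_smult[of _ "-1"] by metis
  qed
  show "trans (hull_rel :: (('a \<times> 'a ncpoly) \<times> _) set)"
  proof (rule transI)
    fix r s t :: "'a \<times> 'a ncpoly" assume "(r, s) \<in> hull_rel" "(s, t) \<in> hull_rel"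
    then have "r \<in> hull_reps" "t \<in> hull_reps" "fst r = fst t"
       "(\<lambda>w. snd r w - snd s w) \<in> I_ideal" "(\<lambda>w. snd s w - snd t w) \<in> I_ideal"
      by (auto simp: hull_rel_iff)
    moreover have "(\<lambda>w. (snd r w - snd s w) + (snd s w - snd t w)) = (\<lambda>w. snd r w - snd t w)" by (rule ext) simp
    ultimately show "(r, t) \<in> hull_rel" unfolding hull_rel_iff using I_add by metis
  qed
  show "(hull_rel :: (('a \<times> 'a ncpoly) \<times> _) set) \<subseteq> hull_reps \<times> hull_reps"
    by (auto simp: hull_rel_def)
qed

definition cls :: "'a::field \<times> 'a ncpoly \<Rightarrow> ('a \<times> 'a ncpoly) set" where
  "cls r = hull_rel `` {r}"

lemma hull_add_reps: "r \<in> hull_reps \<Longrightarrow> s \<in> hull_reps \<Longrightarrow> hull_add r s \<in> hull_reps"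
  by (simp add: reps_iff hull_add_def ncp_add_def free_alg_add)

lemma hull_mult_reps: "r \<in> hull_reps \<Longrightarrow> s \<in> hull_reps \<Longrightarrow> hull_mult r s \<in> hull_reps"
  by (simp add: reps_iff hull_mult_def ncp_add_def ncp_smult_def free_alg_add free_alg_smult free_alg_mult)

lemma hull_add_cong: "(r, r') \<in> hull_rel \<Longrightarrow> (s, s') \<in> hull_rel \<Longrightarrow> (hull_add r s, hull_add r' s') \<in> hull_rel"
proof -
  assume a: "(r, r') \<in> hull_rel" "(s, s') \<in> hull_rel"
  then have "(\<lambda>w. (snd r w - snd r' w) + (snd s w - snd s' w)) \<in> I_ideal"
    by (intro I_add) (auto simp: hull_rel_iff)
  moreover have "(\<lambda>w. (snd r w - snd r' w) + (snd s w - snd s' w)) = (\<lambda>w. snd (hull_add r s) w - snd (hull_add r' s') w)"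
    by (rule ext) (simp add: hull_add_def ncp_add_def)
  ultimately show ?thesis using a by (auto simp: hull_rel_iff hull_add_reps) (simp add: hull_add_def)
qed

lemma hull_mult_cong: "(r, r') \<in> hull_rel \<Longrightarrow> (s, s') \<in> hull_rel \<Longrightarrow> (hull_mult r s, hull_mult r' s') \<in> hull_rel"
proof -
  assume a: "(r, r') \<in> hull_rel" "(s, s') \<in> hull_rel"
  obtain a1 p where r: "r = (a1, p)" by (cases r)
  obtain a2 p' where r': "r' = (a2, p')" by (cases r')
  obtain b1 q where s: "s = (b1, q)" by (cases s)
  obtain b2 q' where s': "s' = (b2, q')" by (cases s')
  have e: "a2 = a1" "b2 = b1" and f: "p \<in> free_alg" "p' \<in> free_alg" "q \<in> free_alg" "q' \<in> free_alg"
    and d: "(\<lambda>w. p w - p' w) \<in> I_ideal" "(\<lambda>w. q w - q' w) \<in> I_ideal"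
    using a by (auto simp: hull_rel_iff r r' s s' reps_iff)
  have "(\<lambda>w. (a1 * (q w - q' w) + b1 * (p w - p' w)) + (ncp_mult (\<lambda>w. p w - p' w) q w + ncp_mult p' (\<lambda>w. q w - q' w) w)) \<in> I_ideal"
    using d f by (intro I_add I_smult I_lmult I_rmult) auto
  moreover have "(\<lambda>w. (a1 * (q w - q' w) + b1 * (p w - p' w)) + (ncp_mult (\<lambda>w. p w - p' w) q w + ncp_mult p' (\<lambda>w. q w - q' w) w))
     = (\<lambda>w. snd (hull_mult r s) w - snd (hull_mult r' s') w)"
    by (rule ext) (simp add: hull_mult_def ncp_add_def ncp_smult_def r r' s s' e ncp_mult_diff_left ncp_mult_diff_right algebra_simps)
  moreover have "hull_mult r s \<in> hull_reps" "hull_mult r' s' \<in> hull_reps"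
    using a by (auto simp: hull_rel_iff intro!: hull_mult_reps)
  moreover have "fst (hull_mult r s) = fst (hull_mult r' s')" by (simp add: hull_mult_def r r' s s' e)
  ultimately show ?thesis unfolding hull_rel_iff by simp
qed

lemma cls_in: "r \<in> hull_reps \<Longrightarrow> r \<in> cls r"
  using equiv_hull unfolding cls_def by (meson equiv_class_self)

lemma cls_eq_iff: "r \<in> hull_reps \<Longrightarrow> s \<in> hull_reps \<Longrightarrow> cls r = cls s \<longleftrightarrow> (r, s) \<in> hull_rel"
  unfolding cls_def using equiv_hull by (rule eq_equiv_class_iff)

lemma cls_eqI: "(r, s) \<in> hull_rel \<Longrightarrow> cls r = cls s"
  unfolding cls_def using equiv_hull by (rule equiv_class_eq)

lemma mem_cls: "r' \<in> cls r \<longleftrightarrow> (r, r') \<in> hull_rel"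
  by (simp add: cls_def)

lemma B1_carrier: "carrier (B1 :: ('a::field \<times> 'a ncpoly) set ring) = cls ` hull_reps"
  unfolding B1_def quotient_def cls_def by auto

lemma B1_mult: "r \<in> hull_reps \<Longrightarrow> s \<in> hull_reps \<Longrightarrow> cls r \<otimes>\<^bsub>B1\<^esub> cls s = cls (hull_mult r s)"
proof -
  assume rs: "r \<in> hull_reps" "s \<in> hull_reps"
  have "(\<Union>r'\<in>cls r. \<Union>s'\<in>cls s. hull_rel `` {hull_mult r' s'}) = cls (hull_mult r s)"
  proof
    show "(\<Union>r'\<in>cls r. \<Union>s'\<in>cls s. hull_rel `` {hull_mult r' s'}) \<subseteq> cls (hull_mult r s)"
    proof (intro UN_least)
      fix r' s' assume "r' \<in> cls r" "s' \<in> cls s"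
      then have "(hull_mult r s, hull_mult r' s') \<in> hull_rel" by (simp add: mem_cls hull_mult_cong)
      then show "hull_rel `` {hull_mult r' s'} \<subseteq> cls (hull_mult r s)"
        using cls_eqI unfolding cls_def by (metis order_refl)
    qed
    show "cls (hull_mult r s) \<subseteq> (\<Union>r'\<in>cls r. \<Union>s'\<in>cls s. hull_rel `` {hull_mult r' s'})"
      using rs cls_in unfolding cls_def by blast
  qed
  then show ?thesis by (simp add: B1_def)
qed

lemma B1_add: "r \<in> hull_reps \<Longrightarrow> s \<in> hull_reps \<Longrightarrow> cls r \<oplus>\<^bsub>B1\<^esub> cls s = cls (hull_add r s)"
proof -
  assume rs: "r \<in> hull_reps" "s \<in> hull_reps"
  have "(\<Union>r'\<in>cls r. \<Union>s'\<in>cls s. hull_rel `` {hull_add r' s'}) = cls (hull_add r s)"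
  proof
    show "(\<Union>r'\<in>cls r. \<Union>s'\<in>cls s. hull_rel `` {hull_add r' s'}) \<subseteq> cls (hull_add r s)"
    proof (intro UN_least)
      fix r' s' assume "r' \<in> cls r" "s' \<in> cls s"
      then have "(hull_add r s, hull_add r' s') \<in> hull_rel" by (simp add: mem_cls hull_add_cong)
      then show "hull_rel `` {hull_add r' s'} \<subseteq> cls (hull_add r s)"
        using cls_eqI unfolding cls_def by (metis order_refl)
    qed
    show "cls (hull_add r s) \<subseteq> (\<Union>r'\<in>cls r. \<Union>s'\<in>cls s. hull_rel `` {hull_add r' s'})"
      using rs cls_in unfolding cls_def by blast
  qed
  then show ?thesis by (simp add: B1_def)
qed

lemma B1_zero: "\<zero>\<^bsub>B1\<^esub> = cls (0, \<lambda>w. 0)"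
  by (simp add: B1_def cls_def ncp_zero_def)
lemma B1_one: "\<one>\<^bsub>B1\<^esub> = cls (1, \<lambda>w. 0)"
  by (simp add: B1_def cls_def ncp_zero_def)
lemma zero_reps: "(c, \<lambda>w. 0) \<in> hull_reps"
  by (simp add: reps_iff free_alg_zero)

lemma hm: "hull_mult (a, p) (b, q) = (a * b, \<lambda>w. a * q w + b * p w + ncp_mult p q w)"
  by (simp add: hull_mult_def ncp_add_def ncp_smult_def)
lemma ha: "hull_add (a, p) (b, q) = (a + b, \<lambda>w. p w + q w)"
  by (simp add: hull_add_def ncp_add_def)

lemma carrierE:
  assumes "x \<in> carrier (B1 :: ('a::field \<times> 'a ncpoly) set ring)"
  obtains a p where "p \<in> free_alg" "x = cls (a, p)"
  using assms unfolding B1_carrier by (auto simp: reps_iff)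

lemma cls_carrier: "p \<in> free_alg \<Longrightarrow> cls (a, p) \<in> carrier (B1 :: ('a::field \<times> 'a ncpoly) set ring)"
  unfolding B1_carrier by (auto simp: reps_iff)

lemma B1_mult': "p \<in> free_alg \<Longrightarrow> q \<in> free_alg \<Longrightarrow>
   cls (a, p) \<otimes>\<^bsub>B1\<^esub> cls (b, q) = cls (a * b, \<lambda>w. a * q w + b * p w + ncp_mult p q w)"
  using B1_mult[of "(a,p)" "(b,q)"] by (simp add: reps_iff hm)
lemma B1_add': "p \<in> free_alg \<Longrightarrow> q \<in> free_alg \<Longrightarrow>
   cls (a, p) \<oplus>\<^bsub>B1\<^esub> cls (b, q) = cls (a + b, \<lambda>w. p w + q w)"
  using B1_add[of "(a,p)" "(b,q)"] by (simp add: reps_iff ha)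

lemma fa_mult_lin: "p \<in> free_alg \<Longrightarrow> q \<in> free_alg \<Longrightarrow> (\<lambda>w. a * q w + b * p w + ncp_mult p q w) \<in> free_alg"
  by (intro free_alg_add free_alg_smult free_alg_mult)
lemma fa_add: "p \<in> free_alg \<Longrightarrow> q \<in> free_alg \<Longrightarrow> (\<lambda>w. p w + q w) \<in> free_alg"
  by (rule free_alg_add)

lemmas lin = ncp_mult_add_left ncp_mult_add_right ncp_mult_smult_left ncp_mult_smult_right ncp_mult_assoc

lemma ring_B1: "ring (B1 :: ('a::field \<times> 'a ncpoly) set ring)"
proof (rule ringI)
  show "abelian_group (B1 :: ('a \<times> 'a ncpoly) set ring)"
  proof (rule abelian_groupI)
    fix x y :: "('a \<times> 'a ncpoly) set" assume "x \<in> carrier (B1 :: ('a \<times> 'a ncpoly) set ring)" "y \<in> carrier B1"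
    then show "x \<oplus>\<^bsub>B1\<^esub> y \<in> carrier B1"
      by (elim carrierE) (simp add: B1_add' cls_carrier fa_add)
  next
    show "\<zero>\<^bsub>B1\<^esub> \<in> carrier (B1 :: ('a \<times> 'a ncpoly) set ring)"
      by (simp add: B1_zero cls_carrier free_alg_zero)
  next
    fix x y z :: "('a \<times> 'a ncpoly) set" assume "x \<in> carrier (B1 :: ('a \<times> 'a ncpoly) set ring)" "y \<in> carrier B1" "z \<in> carrier B1"
    then show "x \<oplus>\<^bsub>B1\<^esub> y \<oplus>\<^bsub>B1\<^esub> z = x \<oplus>\<^bsub>B1\<^esub> (y \<oplus>\<^bsub>B1\<^esub> z)"
      by (elim carrierE) (simp add: B1_add' fa_add add.assoc)
  next
    fix x y :: "('a \<times> 'a ncpoly) set" assume "x \<in> carrier (B1 :: ('a \<times> 'a ncpoly) set ring)" "y \<in> carrier B1"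
    then show "x \<oplus>\<^bsub>B1\<^esub> y = y \<oplus>\<^bsub>B1\<^esub> x"
      by (elim carrierE) (simp add: B1_add' add.commute)
  next
    fix x :: "('a \<times> 'a ncpoly) set" assume "x \<in> carrier (B1 :: ('a \<times> 'a ncpoly) set ring)"
    then show "\<zero>\<^bsub>B1\<^esub> \<oplus>\<^bsub>B1\<^esub> x = x"
      by (elim carrierE) (simp add: B1_zero B1_add' free_alg_zero)
  next
    fix x :: "('a \<times> 'a ncpoly) set" assume "x \<in> carrier (B1 :: ('a \<times> 'a ncpoly) set ring)"
    then show "\<exists>y\<in>carrier B1. y \<oplus>\<^bsub>B1\<^esub> x = \<zero>\<^bsub>B1\<^esub>"
    proof (elim carrierE)
      fix a p assume p: "p \<in> free_alg" and x: "x = cls (a, p)"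
      have np: "(\<lambda>w. (-1) * p w) \<in> free_alg" using p by (rule free_alg_smult)
      have "cls (- a, \<lambda>w. (-1) * p w) \<oplus>\<^bsub>B1\<^esub> x = \<zero>\<^bsub>B1\<^esub>"
        using p np by (simp add: x B1_add' B1_zero)
      then show ?thesis using np cls_carrier by blast
    qed
  qed
next
  show "monoid (B1 :: ('a \<times> 'a ncpoly) set ring)"
  proof (rule monoidI)
    fix x y :: "('a \<times> 'a ncpoly) set" assume "x \<in> carrier (B1 :: ('a \<times> 'a ncpoly) set ring)" "y \<in> carrier B1"
    then show "x \<otimes>\<^bsub>B1\<^esub> y \<in> carrier B1"
      by (elim carrierE) (simp add: B1_mult' cls_carrier fa_mult_lin)
  next
    show "\<one>\<^bsub>B1\<^esub> \<in> carrier (B1 :: ('a \<times> 'a ncpoly) set ring)"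
      by (simp add: B1_one cls_carrier free_alg_zero)
  next
    fix x y z :: "('a \<times> 'a ncpoly) set" assume "x \<in> carrier (B1 :: ('a \<times> 'a ncpoly) set ring)" "y \<in> carrier B1" "z \<in> carrier B1"
    then show "x \<otimes>\<^bsub>B1\<^esub> y \<otimes>\<^bsub>B1\<^esub> z = x \<otimes>\<^bsub>B1\<^esub> (y \<otimes>\<^bsub>B1\<^esub> z)"
    proof (elim carrierE)
      fix a p b q c u assume f: "p \<in> free_alg" "q \<in> free_alg" "u \<in> free_alg"
        and xyz: "x = cls (a, p)" "y = cls (b, q)" "z = cls (c, u)"
      have l1: "(\<lambda>w. a * q w + b * p w + ncp_mult p q w) \<in> free_alg" using f by (simp add: fa_mult_lin)
      have l2: "(\<lambda>w. b * u w + c * q w + ncp_mult q u w) \<in> free_alg" using f by (simp add: fa_mult_lin)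
      have "x \<otimes>\<^bsub>B1\<^esub> y \<otimes>\<^bsub>B1\<^esub> z = cls (a * b * c, \<lambda>w. a * b * u w + c * (a * q w + b * p w + ncp_mult p q w)
           + ncp_mult (\<lambda>w. a * q w + b * p w + ncp_mult p q w) u w)"
        unfolding xyz by (simp only: B1_mult' f l1)
      also have "\<dots> = cls (a * (b * c), \<lambda>w. a * (b * u w + c * q w + ncp_mult q u w) + b * c * p w
           + ncp_mult p (\<lambda>w. b * u w + c * q w + ncp_mult q u w) w)"
        by (rule arg_cong[where f=cls]) (simp add: lin algebra_simps)
      also have "\<dots> = x \<otimes>\<^bsub>B1\<^esub> (y \<otimes>\<^bsub>B1\<^esub> z)"
        unfolding xyz by (simp only: B1_mult' f l2)
      finally show ?thesis .
    qed
  next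
    fix x :: "('a \<times> 'a ncpoly) set" assume "x \<in> carrier (B1 :: ('a \<times> 'a ncpoly) set ring)"
    then show "\<one>\<^bsub>B1\<^esub> \<otimes>\<^bsub>B1\<^esub> x = x"
      by (elim carrierE) (simp add: B1_one B1_mult' free_alg_zero)
  next
    fix x :: "('a \<times> 'a ncpoly) set" assume "x \<in> carrier (B1 :: ('a \<times> 'a ncpoly) set ring)"
    then show "x \<otimes>\<^bsub>B1\<^esub> \<one>\<^bsub>B1\<^esub> = x"
      by (elim carrierE) (simp add: B1_one B1_mult' free_alg_zero)
  qed
next
  fix x y z :: "('a \<times> 'a ncpoly) set" assume "x \<in> carrier (B1 :: ('a \<times> 'a ncpoly) set ring)" "y \<in> carrier B1" "z \<in> carrier B1"
  then show "(x \<oplus>\<^bsub>B1\<^esub> y) \<otimes>\<^bsub>B1\<^esub> z = x \<otimes>\<^bsub>B1\<^esub> z \<oplus>\<^bsub>B1\<^esub> y \<otimes>\<^bsub>B1\<^esub> z"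
  proof (elim carrierE)
    fix a p b q c u assume f: "p \<in> free_alg" "q \<in> free_alg" "u \<in> free_alg"
      and xyz: "x = cls (a, p)" "y = cls (b, q)" "z = cls (c, u)"
    have s1: "(\<lambda>w. p w + q w) \<in> free_alg" "(\<lambda>w. a * u w + c * p w + ncp_mult p u w) \<in> free_alg"
      "(\<lambda>w. b * u w + c * q w + ncp_mult q u w) \<in> free_alg" using f by (simp_all add: fa_mult_lin fa_add)
    have "(x \<oplus>\<^bsub>B1\<^esub> y) \<otimes>\<^bsub>B1\<^esub> z = cls ((a + b) * c, \<lambda>w. (a + b) * u w + c * (p w + q w) + ncp_mult (\<lambda>w. p w + q w) u w)"
      unfolding xyz by (simp only: B1_add' B1_mult' f s1)
    also have "\<dots> = cls (a * c + b * c, \<lambda>w. (a * u w + c * p w + ncp_mult p u w) + (b * u w + c * q w + ncp_mult q u w))"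
      by (rule arg_cong[where f=cls]) (simp add: lin algebra_simps)
    also have "\<dots> = x \<otimes>\<^bsub>B1\<^esub> z \<oplus>\<^bsub>B1\<^esub> y \<otimes>\<^bsub>B1\<^esub> z"
      unfolding xyz by (simp only: B1_add' B1_mult' f s1)
    finally show ?thesis .
  qed
next
  fix x y z :: "('a \<times> 'a ncpoly) set" assume "x \<in> carrier (B1 :: ('a \<times> 'a ncpoly) set ring)" "y \<in> carrier B1" "z \<in> carrier B1"
  then show "z \<otimes>\<^bsub>B1\<^esub> (x \<oplus>\<^bsub>B1\<^esub> y) = z \<otimes>\<^bsub>B1\<^esub> x \<oplus>\<^bsub>B1\<^esub> z \<otimes>\<^bsub>B1\<^esub> y"
  proof (elim carrierE)
    fix a p b q c u assume f: "p \<in> free_alg" "q \<in> free_alg" "u \<in> free_alg"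
      and xyz: "x = cls (a, p)" "y = cls (b, q)" "z = cls (c, u)"
    have s1: "(\<lambda>w. p w + q w) \<in> free_alg" "(\<lambda>w. c * p w + a * u w + ncp_mult u p w) \<in> free_alg"
      "(\<lambda>w. c * q w + b * u w + ncp_mult u q w) \<in> free_alg" using f by (simp_all add: fa_mult_lin fa_add)
    have "z \<otimes>\<^bsub>B1\<^esub> (x \<oplus>\<^bsub>B1\<^esub> y) = cls (c * (a + b), \<lambda>w. c * (p w + q w) + (a + b) * u w + ncp_mult u (\<lambda>w. p w + q w) w)"
      unfolding xyz by (simp only: B1_add' B1_mult' f s1)
    also have "\<dots> = cls (c * a + c * b, \<lambda>w. (c * p w + a * u w + ncp_mult u p w) + (c * q w + b * u w + ncp_mult u q w))"
      by (rule arg_cong[where f=cls]) (simp add: lin algebra_simps)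
    also have "\<dots> = z \<otimes>\<^bsub>B1\<^esub> x \<oplus>\<^bsub>B1\<^esub> z \<otimes>\<^bsub>B1\<^esub> y"
      unfolding xyz by (simp only: B1_add' B1_mult' f s1)
    finally show ?thesis .
  qed
qed

definition nbr :: "'a::field ncpoly \<Rightarrow> 'a ncpoly \<Rightarrow> 'a ncpoly" where
  "nbr p q = (\<lambda>w. ncp_mult p q w - ncp_mult q p w)"

fun ncom :: "nat \<Rightarrow> 'a::field ncpoly \<Rightarrow> 'a ncpoly \<Rightarrow> 'a ncpoly" where
  "ncom 0 p q = p"
| "ncom (Suc k) p q = nbr (ncom k p q) q"

declare ncom.simps(2)[simp del]

lemma nbr_free: "p \<in> free_alg \<Longrightarrow> q \<in> free_alg \<Longrightarrow> nbr p q \<in> free_alg"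
proof -
  assume "p \<in> free_alg" "q \<in> free_alg"
  then have "(\<lambda>w. ncp_mult p q w + (-1) * ncp_mult q p w) \<in> free_alg"
    by (intro free_alg_add free_alg_smult free_alg_mult)
  then show ?thesis by (simp add: nbr_def)
qed

lemma ncom_free: "p \<in> free_alg \<Longrightarrow> q \<in> free_alg \<Longrightarrow> ncom k p q \<in> free_alg"
  by (induction k) (simp_all add: ncom.simps(2) nbr_free)

lemma vb_diff: "vb n a \<Longrightarrow> vb n b \<Longrightarrow> vb n (\<lambda>w. a w - b w)"
  by (simp add: vb_def)

lemma ncom_vb: assumes "p [] = 0" "q [] = 0" shows "vb (Suc k) (ncom k p q)"
proof (induction k)
  case 0 then show ?case using assms(1) by (simp add: vb_def)
next
  case (Suc k)
  have q1: "vb 1 q" using assms(2) by (simp add: vb_def)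
  have "vb (Suc k + 1) (ncp_mult (ncom k p q) q)" by (rule vb_mult[OF Suc q1])
  moreover have "vb (1 + Suc k) (ncp_mult q (ncom k p q))" by (rule vb_mult[OF q1 Suc])
  ultimately show ?case by (simp add: ncom.simps(2) nbr_def vb_diff)
qed

lemma ncom_Suc_pt: "ncom (Suc k) p q w = ncp_mult (ncom k p q) q w - ncp_mult q (ncom k p q) w"
  by (simp add: ncom.simps(2) nbr_def)

lemma B1_neg: "p \<in> free_alg \<Longrightarrow> \<ominus>\<^bsub>B1\<^esub> cls (a, p) = cls (- a, \<lambda>w. (-1) * p w)"
proof -
  assume p: "p \<in> free_alg"
  interpret R: ring "B1 :: ('a \<times> 'a ncpoly) set ring" by (rule ring_B1)
  have np: "(\<lambda>w. (-1) * p w) \<in> free_alg" using p by (rule free_alg_smult)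
  have "cls (- a, \<lambda>w. (-1) * p w) \<oplus>\<^bsub>B1\<^esub> cls (a, p) = \<zero>\<^bsub>B1\<^esub>"
    using p np by (simp add: B1_add' B1_zero)
  then show ?thesis using p np cls_carrier R.minus_equality by blast
qed

lemma B1_bracket:
  assumes p: "p \<in> free_alg" and q: "q \<in> free_alg"
  shows "lie_bracket B1 (cls (a, p)) (cls (b, q)) = cls (0, nbr p q)"
proof -
  interpret R: ring "B1 :: ('a \<times> 'a ncpoly) set ring" by (rule ring_B1)
  have f1: "(\<lambda>w. a * q w + b * p w + ncp_mult p q w) \<in> free_alg" "(\<lambda>w. b * p w + a * q w + ncp_mult q p w) \<in> free_alg"
    using p q by (simp_all add: fa_mult_lin)
  have f2: "(\<lambda>w. (-1) * (b * p w + a * q w + ncp_mult q p w)) \<in> free_alg"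
    using f1(2) by (rule free_alg_smult)
  have "lie_bracket B1 (cls (a, p)) (cls (b, q)) =
     cls (a * b, \<lambda>w. a * q w + b * p w + ncp_mult p q w) \<oplus>\<^bsub>B1\<^esub> \<ominus>\<^bsub>B1\<^esub> cls (b * a, \<lambda>w. b * p w + a * q w + ncp_mult q p w)"
    unfolding lie_bracket_def R.minus_eq using p q by (simp only: B1_mult')
  also have "\<dots> = cls (a * b + - (b * a), \<lambda>w. (a * q w + b * p w + ncp_mult p q w) + (-1) * (b * p w + a * q w + ncp_mult q p w))"
    by (simp only: B1_neg f1 f2 B1_add')
  also have "\<dots> = cls (0, nbr p q)"
    by (rule arg_cong[where f=cls]) (auto simp: nbr_def algebra_simps)
  finally show ?thesis .
qed

lemma B1_lie_iter:
  assumes p: "p \<in> free_alg" and q: "q \<in> free_alg"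
  shows "lie_iter B1 (Suc k) (cls (a, p)) (cls (b, q)) = cls (0, ncom (Suc k) p q)"
proof (induction k)
  case 0 then show ?case using B1_bracket[OF p q] by (simp add: ncom.simps(2))
next
  case (Suc k)
  have "ncom (Suc k) p q \<in> free_alg" using p q by (rule ncom_free)
  then show ?case using Suc B1_bracket[OF _ q] by (simp add: ncom.simps(2)[of "Suc k"])
qed

context
  fixes p q :: "'a::field ncpoly"
  assumes p0: "p [] = 0" and q0: "q [] = 0"
begin

lemma vz: "length w < Suc k \<Longrightarrow> ncom k p q w = 0" using ncom_vb[of p q k, OF p0 q0] by (simp add: vb_def)


lemma c1_xy: "ncom (Suc (0)) p q [X,Y] = - p [Y] * q [X] + p [X] * q [Y]"
  by (simp add: ncom_Suc_pt[of "0"] ncp_mult_Cons p0 q0 vz  algebra_simps)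

lemma c1_yx: "ncom (Suc (0)) p q [Y,X] = p [Y] * q [X] - p [X] * q [Y]"
  by (simp add: ncom_Suc_pt[of "0"] ncp_mult_Cons p0 q0 vz  algebra_simps)

lemma c1_yy: "ncom (Suc (0)) p q [Y,Y] = 0"
  by (simp add: ncom_Suc_pt[of "0"] ncp_mult_Cons p0 q0 vz  algebra_simps)

lemma c1_xyx: "ncom (Suc (0)) p q [X,Y,X] = - p [Y,X] * q [X] + p [X,Y] * q [X] + p [X] * q [Y,X] - p [X] * q [X,Y]"
  by (simp add: ncom_Suc_pt[of "0"] ncp_mult_Cons p0 q0 vz  algebra_simps)

lemma c1_xyy: "ncom (Suc (0)) p q [X,Y,Y] = - p [Y,Y] * q [X] + p [X,Y] * q [Y] - p [Y] * q [X,Y] + p [X] * q [Y,Y]"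
  by (simp add: ncom_Suc_pt[of "0"] ncp_mult_Cons p0 q0 vz  algebra_simps)

lemma c1_yxy: "ncom (Suc (0)) p q [Y,X,Y] = p [Y,X] * q [Y] - p [X,Y] * q [Y] - p [Y] * q [Y,X] + p [Y] * q [X,Y]"
  by (simp add: ncom_Suc_pt[of "0"] ncp_mult_Cons p0 q0 vz  algebra_simps)

lemma c1_yyx: "ncom (Suc (0)) p q [Y,Y,X] = p [Y,Y] * q [X] - p [Y,X] * q [Y] + p [Y] * q [Y,X] - p [X] * q [Y,Y]"
  by (simp add: ncom_Suc_pt[of "0"] ncp_mult_Cons p0 q0 vz  algebra_simps)

lemma c1_yyy: "ncom (Suc (0)) p q [Y,Y,Y] = 0"
  by (simp add: ncom_Suc_pt[of "0"] ncp_mult_Cons p0 q0 vz  algebra_simps)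

lemma c2_xyx: "ncom (Suc (Suc (0))) p q [X,Y,X] = - 2 * p [Y] * q [X] * q [X] + 2 * p [X] * q [X] * q [Y]"
  by (simp add: ncom_Suc_pt[of "Suc (0)"] ncp_mult_Cons p0 q0 vz c1_xy c1_yx c1_yy c1_xyx c1_xyy c1_yxy c1_yyx c1_yyy algebra_simps)

lemma c2_xyy: "ncom (Suc (Suc (0))) p q [X,Y,Y] = - p [Y] * q [X] * q [Y] + p [X] * q [Y] * q [Y]"
  by (simp add: ncom_Suc_pt[of "Suc (0)"] ncp_mult_Cons p0 q0 vz c1_xy c1_yx c1_yy c1_xyx c1_xyy c1_yxy c1_yyx c1_yyy algebra_simps)

lemma c2_yxy: "ncom (Suc (Suc (0))) p q [Y,X,Y] = 2 * p [Y] * q [X] * q [Y] - 2 * p [X] * q [Y] * q [Y]"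
  by (simp add: ncom_Suc_pt[of "Suc (0)"] ncp_mult_Cons p0 q0 vz c1_xy c1_yx c1_yy c1_xyx c1_xyy c1_yxy c1_yyx c1_yyy algebra_simps)

lemma c2_yyx: "ncom (Suc (Suc (0))) p q [Y,Y,X] = - p [Y] * q [X] * q [Y] + p [X] * q [Y] * q [Y]"
  by (simp add: ncom_Suc_pt[of "Suc (0)"] ncp_mult_Cons p0 q0 vz c1_xy c1_yx c1_yy c1_xyx c1_xyy c1_yxy c1_yyx c1_yyy algebra_simps)

lemma c2_yyy: "ncom (Suc (Suc (0))) p q [Y,Y,Y] = 0"
  by (simp add: ncom_Suc_pt[of "Suc (0)"] ncp_mult_Cons p0 q0 vz c1_xy c1_yx c1_yy c1_xyx c1_xyy c1_yxy c1_yyx c1_yyy algebra_simps)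

lemma c2_xyxy: "ncom (Suc (Suc (0))) p q [X,Y,X,Y] = - 2 * p [Y,X] * q [X] * q [Y] + 2 * p [X,Y] * q [X] * q [Y] + p [Y] * q [X] * q [Y,X] - p [Y] * q [X] * q [X,Y] + p [X] * q [Y] * q [Y,X] - p [X] * q [Y] * q [X,Y]"
  by (simp add: ncom_Suc_pt[of "Suc (0)"] ncp_mult_Cons p0 q0 vz c1_xy c1_yx c1_yy c1_xyx c1_xyy c1_yxy c1_yyx c1_yyy algebra_simps)

lemma c2_xyyy: "ncom (Suc (Suc (0))) p q [X,Y,Y,Y] = - p [Y,Y] * q [X] * q [Y] + p [X,Y] * q [Y] * q [Y] - p [Y] * q [Y] * q [X,Y] - p [Y] * q [X] * q [Y,Y] + 2 * p [X] * q [Y] * q [Y,Y]"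
  by (simp add: ncom_Suc_pt[of "Suc (0)"] ncp_mult_Cons p0 q0 vz c1_xy c1_yx c1_yy c1_xyx c1_xyy c1_yxy c1_yyx c1_yyy algebra_simps)

lemma c2_yxyx: "ncom (Suc (Suc (0))) p q [Y,X,Y,X] = 2 * p [Y,X] * q [X] * q [Y] - 2 * p [X,Y] * q [X] * q [Y] - p [Y] * q [X] * q [Y,X] + p [Y] * q [X] * q [X,Y] - p [X] * q [Y] * q [Y,X] + p [X] * q [Y] * q [X,Y]"
  by (simp add: ncom_Suc_pt[of "Suc (0)"] ncp_mult_Cons p0 q0 vz c1_xy c1_yx c1_yy c1_xyx c1_xyy c1_yxy c1_yyx c1_yyy algebra_simps)

lemma c2_yxyy: "ncom (Suc (Suc (0))) p q [Y,X,Y,Y] = p [Y,Y] * q [X] * q [Y] + p [Y,X] * q [Y] * q [Y] - 2 * p [X,Y] * q [Y] * q [Y] - p [Y] * q [Y] * q [Y,X] + 2 * p [Y] * q [Y] * q [X,Y] + p [Y] * q [X] * q [Y,Y] - 2 * p [X] * q [Y] * q [Y,Y]"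
  by (simp add: ncom_Suc_pt[of "Suc (0)"] ncp_mult_Cons p0 q0 vz c1_xy c1_yx c1_yy c1_xyx c1_xyy c1_yxy c1_yyx c1_yyy algebra_simps)

lemma c2_yyxy: "ncom (Suc (Suc (0))) p q [Y,Y,X,Y] = p [Y,Y] * q [X] * q [Y] - 2 * p [Y,X] * q [Y] * q [Y] + p [X,Y] * q [Y] * q [Y] + 2 * p [Y] * q [Y] * q [Y,X] - p [Y] * q [Y] * q [X,Y] + p [Y] * q [X] * q [Y,Y] - 2 * p [X] * q [Y] * q [Y,Y]"
  by (simp add: ncom_Suc_pt[of "Suc (0)"] ncp_mult_Cons p0 q0 vz c1_xy c1_yx c1_yy c1_xyx c1_xyy c1_yxy c1_yyx c1_yyy algebra_simps)

lemma c2_yyyx: "ncom (Suc (Suc (0))) p q [Y,Y,Y,X] = - p [Y,Y] * q [X] * q [Y] + p [Y,X] * q [Y] * q [Y] - p [Y] * q [Y] * q [Y,X] - p [Y] * q [X] * q [Y,Y] + 2 * p [X] * q [Y] * q [Y,Y]"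
  by (simp add: ncom_Suc_pt[of "Suc (0)"] ncp_mult_Cons p0 q0 vz c1_xy c1_yx c1_yy c1_xyx c1_xyy c1_yxy c1_yyx c1_yyy algebra_simps)

lemma c3_xyxy: "ncom (Suc (Suc (Suc (0)))) p q [X,Y,X,Y] = - 4 * p [Y] * q [X] * q [X] * q [Y] + 4 * p [X] * q [X] * q [Y] * q [Y]"
  by (simp add: ncom_Suc_pt[of "Suc (Suc (0))"] ncp_mult_Cons p0 q0 vz c2_xyx c2_xyy c2_yxy c2_yyx c2_yyy c2_xyxy c2_xyyy c2_yxyx c2_yxyy c2_yyxy c2_yyyx algebra_simps)

lemma c3_xyyy: "ncom (Suc (Suc (Suc (0)))) p q [X,Y,Y,Y] = - p [Y] * q [X] * q [Y] * q [Y] + p [X] * q [Y] * q [Y] * q [Y]"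
  by (simp add: ncom_Suc_pt[of "Suc (Suc (0))"] ncp_mult_Cons p0 q0 vz c2_xyx c2_xyy c2_yxy c2_yyx c2_yyy c2_xyxy c2_xyyy c2_yxyx c2_yxyy c2_yyxy c2_yyyx algebra_simps)

lemma c3_yxyx: "ncom (Suc (Suc (Suc (0)))) p q [Y,X,Y,X] = 4 * p [Y] * q [X] * q [X] * q [Y] - 4 * p [X] * q [X] * q [Y] * q [Y]"
  by (simp add: ncom_Suc_pt[of "Suc (Suc (0))"] ncp_mult_Cons p0 q0 vz c2_xyx c2_xyy c2_yxy c2_yyx c2_yyy c2_xyxy c2_xyyy c2_yxyx c2_yxyy c2_yyxy c2_yyyx algebra_simps)

lemma c3_yxyy: "ncom (Suc (Suc (Suc (0)))) p q [Y,X,Y,Y] = 3 * p [Y] * q [X] * q [Y] * q [Y] - 3 * p [X] * q [Y] * q [Y] * q [Y]"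
  by (simp add: ncom_Suc_pt[of "Suc (Suc (0))"] ncp_mult_Cons p0 q0 vz c2_xyx c2_xyy c2_yxy c2_yyx c2_yyy c2_xyxy c2_xyyy c2_yxyx c2_yxyy c2_yyxy c2_yyyx algebra_simps)

lemma c3_yyxy: "ncom (Suc (Suc (Suc (0)))) p q [Y,Y,X,Y] = - 3 * p [Y] * q [X] * q [Y] * q [Y] + 3 * p [X] * q [Y] * q [Y] * q [Y]"
  by (simp add: ncom_Suc_pt[of "Suc (Suc (0))"] ncp_mult_Cons p0 q0 vz c2_xyx c2_xyy c2_yxy c2_yyx c2_yyy c2_xyxy c2_xyyy c2_yxyx c2_yxyy c2_yyxy c2_yyyx algebra_simps)

lemma c3_yyyx: "ncom (Suc (Suc (Suc (0)))) p q [Y,Y,Y,X] = p [Y] * q [X] * q [Y] * q [Y] - p [X] * q [Y] * q [Y] * q [Y]"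
  by (simp add: ncom_Suc_pt[of "Suc (Suc (0))"] ncp_mult_Cons p0 q0 vz c2_xyx c2_xyy c2_yxy c2_yyx c2_yyy c2_xyxy c2_xyyy c2_yxyx c2_yxyy c2_yyxy c2_yyyx algebra_simps)

lemma c3_xyxyy: "ncom (Suc (Suc (Suc (0)))) p q [X,Y,X,Y,Y] = - p [Y,Y] * q [X] * q [X] * q [Y] - 3 * p [Y,X] * q [X] * q [Y] * q [Y] + 4 * p [X,Y] * q [X] * q [Y] * q [Y] + 2 * p [Y] * q [X] * q [Y] * q [Y,X] - 2 * p [Y] * q [X] * q [Y] * q [X,Y] - 3 * p [Y] * q [X] * q [X] * q [Y,Y] + p [X] * q [Y] * q [Y] * q [Y,X] - 2 * p [X] * q [Y] * q [Y] * q [X,Y] + 4 * p [X] * q [X] * q [Y] * q [Y,Y]"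
  by (simp add: ncom_Suc_pt[of "Suc (Suc (0))"] ncp_mult_Cons p0 q0 vz c2_xyx c2_xyy c2_yxy c2_yyx c2_yyy c2_xyxy c2_xyyy c2_yxyx c2_yxyy c2_yyxy c2_yyyx algebra_simps)

lemma c3_xyyyx: "ncom (Suc (Suc (Suc (0)))) p q [X,Y,Y,Y,X] = - p [Y,X] * q [X] * q [Y] * q [Y] + p [X,Y] * q [X] * q [Y] * q [Y] + p [X] * q [Y] * q [Y] * q [Y,X] - p [X] * q [Y] * q [Y] * q [X,Y]"
  by (simp add: ncom_Suc_pt[of "Suc (Suc (0))"] ncp_mult_Cons p0 q0 vz c2_xyx c2_xyy c2_yxy c2_yyx c2_yyy c2_xyxy c2_xyyy c2_yxyx c2_yxyy c2_yyxy c2_yyyx algebra_simps)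

lemma c3_yxyxy: "ncom (Suc (Suc (Suc (0)))) p q [Y,X,Y,X,Y] = 4 * p [Y,X] * q [X] * q [Y] * q [Y] - 4 * p [X,Y] * q [X] * q [Y] * q [Y] - 4 * p [Y] * q [X] * q [Y] * q [Y,X] + 4 * p [Y] * q [X] * q [Y] * q [X,Y]"
  by (simp add: ncom_Suc_pt[of "Suc (Suc (0))"] ncp_mult_Cons p0 q0 vz c2_xyx c2_xyy c2_yxy c2_yyx c2_yyy c2_xyxy c2_xyyy c2_yxyx c2_yxyy c2_yyxy c2_yyyx algebra_simps)

lemma c3_yxyyy: "ncom (Suc (Suc (Suc (0)))) p q [Y,X,Y,Y,Y] = 2 * p [Y,Y] * q [X] * q [Y] * q [Y] + p [Y,X] * q [Y] * q [Y] * q [Y] - 3 * p [X,Y] * q [Y] * q [Y] * q [Y] - p [Y] * q [Y] * q [Y] * q [Y,X] + 3 * p [Y] * q [Y] * q [Y] * q [X,Y] + 4 * p [Y] * q [X] * q [Y] * q [Y,Y] - 6 * p [X] * q [Y] * q [Y] * q [Y,Y]"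
  by (simp add: ncom_Suc_pt[of "Suc (Suc (0))"] ncp_mult_Cons p0 q0 vz c2_xyx c2_xyy c2_yxy c2_yyx c2_yyy c2_xyxy c2_xyyy c2_yxyx c2_yxyy c2_yyxy c2_yyyx algebra_simps)

lemma c3_yyxyx: "ncom (Suc (Suc (Suc (0)))) p q [Y,Y,X,Y,X] = p [Y,Y] * q [X] * q [X] * q [Y] - 4 * p [Y,X] * q [X] * q [Y] * q [Y] + 3 * p [X,Y] * q [X] * q [Y] * q [Y] + 2 * p [Y] * q [X] * q [Y] * q [Y,X] - 2 * p [Y] * q [X] * q [Y] * q [X,Y] + 3 * p [Y] * q [X] * q [X] * q [Y,Y] + 2 * p [X] * q [Y] * q [Y] * q [Y,X] - p [X] * q [Y] * q [Y] * q [X,Y] - 4 * p [X] * q [X] * q [Y] * q [Y,Y]"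
  by (simp add: ncom_Suc_pt[of "Suc (Suc (0))"] ncp_mult_Cons p0 q0 vz c2_xyx c2_xyy c2_yxy c2_yyx c2_yyy c2_xyxy c2_xyyy c2_yxyx c2_yxyy c2_yyxy c2_yyyx algebra_simps)

lemma c3_yyyxy: "ncom (Suc (Suc (Suc (0)))) p q [Y,Y,Y,X,Y] = - 2 * p [Y,Y] * q [X] * q [Y] * q [Y] + 3 * p [Y,X] * q [Y] * q [Y] * q [Y] - p [X,Y] * q [Y] * q [Y] * q [Y] - 3 * p [Y] * q [Y] * q [Y] * q [Y,X] + p [Y] * q [Y] * q [Y] * q [X,Y] - 4 * p [Y] * q [X] * q [Y] * q [Y,Y] + 6 * p [X] * q [Y] * q [Y] * q [Y,Y]"
  by (simp add: ncom_Suc_pt[of "Suc (Suc (0))"] ncp_mult_Cons p0 q0 vz c2_xyx c2_xyy c2_yxy c2_yyx c2_yyy c2_xyxy c2_xyyy c2_yxyx c2_yxyy c2_yyxy c2_yyyx algebra_simps)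

lemma c4_xyxyy: "ncom (Suc (Suc (Suc (Suc (0))))) p q [X,Y,X,Y,Y] = - 7 * p [Y] * q [X] * q [X] * q [Y] * q [Y] + 7 * p [X] * q [X] * q [Y] * q [Y] * q [Y]"
  by (simp add: ncom_Suc_pt[of "Suc (Suc (Suc (0)))"] ncp_mult_Cons p0 q0 vz c3_xyxy c3_xyyy c3_yxyx c3_yxyy c3_yyxy c3_yyyx c3_xyxyy c3_xyyyx c3_yxyxy c3_yxyyy c3_yyxyx c3_yyyxy algebra_simps)

lemma c4_xyyyx: "ncom (Suc (Suc (Suc (Suc (0))))) p q [X,Y,Y,Y,X] = - 2 * p [Y] * q [X] * q [X] * q [Y] * q [Y] + 2 * p [X] * q [X] * q [Y] * q [Y] * q [Y]"
  by (simp add: ncom_Suc_pt[of "Suc (Suc (Suc (0)))"] ncp_mult_Cons p0 q0 vz c3_xyxy c3_xyyy c3_yxyx c3_yxyy c3_yyxy c3_yyyx c3_xyxyy c3_xyyyx c3_yxyxy c3_yxyyy c3_yyxyx c3_yyyxy algebra_simps)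

lemma c4_yxyxy: "ncom (Suc (Suc (Suc (Suc (0))))) p q [Y,X,Y,X,Y] = 8 * p [Y] * q [X] * q [X] * q [Y] * q [Y] - 8 * p [X] * q [X] * q [Y] * q [Y] * q [Y]"
  by (simp add: ncom_Suc_pt[of "Suc (Suc (Suc (0)))"] ncp_mult_Cons p0 q0 vz c3_xyxy c3_xyyy c3_yxyx c3_yxyy c3_yyxy c3_yyyx c3_xyxyy c3_xyyyx c3_yxyxy c3_yxyyy c3_yyxyx c3_yyyxy algebra_simps)

lemma c4_yxyyy: "ncom (Suc (Suc (Suc (Suc (0))))) p q [Y,X,Y,Y,Y] = 4 * p [Y] * q [X] * q [Y] * q [Y] * q [Y] - 4 * p [X] * q [Y] * q [Y] * q [Y] * q [Y]"
  by (simp add: ncom_Suc_pt[of "Suc (Suc (Suc (0)))"] ncp_mult_Cons p0 q0 vz c3_xyxy c3_xyyy c3_yxyx c3_yxyy c3_yyxy c3_yyyx c3_xyxyy c3_xyyyx c3_yxyxy c3_yxyyy c3_yyxyx c3_yyyxy algebra_simps)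

lemma c4_yyxyx: "ncom (Suc (Suc (Suc (Suc (0))))) p q [Y,Y,X,Y,X] = - 7 * p [Y] * q [X] * q [X] * q [Y] * q [Y] + 7 * p [X] * q [X] * q [Y] * q [Y] * q [Y]"
  by (simp add: ncom_Suc_pt[of "Suc (Suc (Suc (0)))"] ncp_mult_Cons p0 q0 vz c3_xyxy c3_xyyy c3_yxyx c3_yxyy c3_yyxy c3_yyyx c3_xyxyy c3_xyyyx c3_yxyxy c3_yxyyy c3_yyxyx c3_yyyxy algebra_simps)

lemma c4_yyyxy: "ncom (Suc (Suc (Suc (Suc (0))))) p q [Y,Y,Y,X,Y] = 4 * p [Y] * q [X] * q [Y] * q [Y] * q [Y] - 4 * p [X] * q [Y] * q [Y] * q [Y] * q [Y]"
  by (simp add: ncom_Suc_pt[of "Suc (Suc (Suc (0)))"] ncp_mult_Cons p0 q0 vz c3_xyxy c3_xyyy c3_yxyx c3_yxyy c3_yyxy c3_yyyx c3_xyxyy c3_xyyyx c3_yxyxy c3_yxyyy c3_yyxyx c3_yyyxy algebra_simps)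

lemma c4_xyyyxy: "ncom (Suc (Suc (Suc (Suc (0))))) p q [X,Y,Y,Y,X,Y] = 2 * p [Y,Y] * q [X] * q [X] * q [Y] * q [Y] - 4 * p [Y,X] * q [X] * q [Y] * q [Y] * q [Y] + 2 * p [X,Y] * q [X] * q [Y] * q [Y] * q [Y] + 3 * p [Y] * q [X] * q [Y] * q [Y] * q [Y,X] + p [Y] * q [X] * q [Y] * q [Y] * q [X,Y] + 4 * p [Y] * q [X] * q [X] * q [Y] * q [Y,Y] + p [X] * q [Y] * q [Y] * q [Y] * q [Y,X] - 3 * p [X] * q [Y] * q [Y] * q [Y] * q [X,Y] - 6 * p [X] * q [X] * q [Y] * q [Y] * q [Y,Y]"
  by (simp add: ncom_Suc_pt[of "Suc (Suc (Suc (0)))"] ncp_mult_Cons p0 q0 vz c3_xyxy c3_xyyy c3_yxyx c3_yxyy c3_yyxy c3_yyyx c3_xyxyy c3_xyyyx c3_yxyxy c3_yxyyy c3_yyxyx c3_yyyxy algebra_simps)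

lemma c4_yxyxyy: "ncom (Suc (Suc (Suc (Suc (0))))) p q [Y,X,Y,X,Y,Y] = p [Y,Y] * q [X] * q [X] * q [Y] * q [Y] + 7 * p [Y,X] * q [X] * q [Y] * q [Y] * q [Y] - 8 * p [X,Y] * q [X] * q [Y] * q [Y] * q [Y] - 9 * p [Y] * q [X] * q [Y] * q [Y] * q [Y,X] + 6 * p [Y] * q [X] * q [Y] * q [Y] * q [X,Y] + 7 * p [Y] * q [X] * q [X] * q [Y] * q [Y,Y] + 2 * p [X] * q [Y] * q [Y] * q [Y] * q [Y,X] + 2 * p [X] * q [Y] * q [Y] * q [Y] * q [X,Y] - 8 * p [X] * q [X] * q [Y] * q [Y] * q [Y,Y]"
  by (simp add: ncom_Suc_pt[of "Suc (Suc (Suc (0)))"] ncp_mult_Cons p0 q0 vz c3_xyxy c3_xyyy c3_yxyx c3_yxyy c3_yyxy c3_yyyx c3_xyxyy c3_xyyyx c3_yxyxy c3_yxyyy c3_yyxyx c3_yyyxy algebra_simps)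

lemma c4_yxyyyx: "ncom (Suc (Suc (Suc (Suc (0))))) p q [Y,X,Y,Y,Y,X] = 2 * p [Y,Y] * q [X] * q [X] * q [Y] * q [Y] + 2 * p [Y,X] * q [X] * q [Y] * q [Y] * q [Y] - 4 * p [X,Y] * q [X] * q [Y] * q [Y] * q [Y] + p [Y] * q [X] * q [Y] * q [Y] * q [Y,X] + 3 * p [Y] * q [X] * q [Y] * q [Y] * q [X,Y] + 4 * p [Y] * q [X] * q [X] * q [Y] * q [Y,Y] - 3 * p [X] * q [Y] * q [Y] * q [Y] * q [Y,X] + p [X] * q [Y] * q [Y] * q [Y] * q [X,Y] - 6 * p [X] * q [X] * q [Y] * q [Y] * q [Y,Y]"
  by (simp add: ncom_Suc_pt[of "Suc (Suc (Suc (0)))"] ncp_mult_Cons p0 q0 vz c3_xyxy c3_xyyy c3_yxyx c3_yxyy c3_yyxy c3_yyyx c3_xyxyy c3_xyyyx c3_yxyxy c3_yxyyy c3_yyxyx c3_yyyxy algebra_simps)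

lemma c4_yyxyxy: "ncom (Suc (Suc (Suc (Suc (0))))) p q [Y,Y,X,Y,X,Y] = p [Y,Y] * q [X] * q [X] * q [Y] * q [Y] - 8 * p [Y,X] * q [X] * q [Y] * q [Y] * q [Y] + 7 * p [X,Y] * q [X] * q [Y] * q [Y] * q [Y] + 6 * p [Y] * q [X] * q [Y] * q [Y] * q [Y,X] - 9 * p [Y] * q [X] * q [Y] * q [Y] * q [X,Y] + 7 * p [Y] * q [X] * q [X] * q [Y] * q [Y,Y] + 2 * p [X] * q [Y] * q [Y] * q [Y] * q [Y,X] + 2 * p [X] * q [Y] * q [Y] * q [Y] * q [X,Y] - 8 * p [X] * q [X] * q [Y] * q [Y] * q [Y,Y]"
  by (simp add: ncom_Suc_pt[of "Suc (Suc (Suc (0)))"] ncp_mult_Cons p0 q0 vz c3_xyxy c3_xyyy c3_yxyx c3_yxyy c3_yyxy c3_yyyx c3_xyxyy c3_xyyyx c3_yxyxy c3_yxyyy c3_yyxyx c3_yyyxy algebra_simps)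

lemma c5_xyyyxy: "ncom (Suc (Suc (Suc (Suc (Suc (0)))))) p q [X,Y,Y,Y,X,Y] = - 6 * p [Y] * q [X] * q [X] * q [Y] * q [Y] * q [Y] + 6 * p [X] * q [X] * q [Y] * q [Y] * q [Y] * q [Y]"
  by (simp add: ncom_Suc_pt[of "Suc (Suc (Suc (Suc (0))))"] ncp_mult_Cons p0 q0 vz c4_xyxyy c4_xyyyx c4_yxyxy c4_yxyyy c4_yyxyx c4_yyyxy c4_xyyyxy c4_yxyxyy c4_yxyyyx c4_yyxyxy algebra_simps)

lemma c5_yxyxyy: "ncom (Suc (Suc (Suc (Suc (Suc (0)))))) p q [Y,X,Y,X,Y,Y] = 15 * p [Y] * q [X] * q [X] * q [Y] * q [Y] * q [Y] - 15 * p [X] * q [X] * q [Y] * q [Y] * q [Y] * q [Y]"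
  by (simp add: ncom_Suc_pt[of "Suc (Suc (Suc (Suc (0))))"] ncp_mult_Cons p0 q0 vz c4_xyxyy c4_xyyyx c4_yxyxy c4_yxyyy c4_yyxyx c4_yyyxy c4_xyyyxy c4_yxyxyy c4_yxyyyx c4_yyxyxy algebra_simps)

lemma c5_yxyyyx: "ncom (Suc (Suc (Suc (Suc (Suc (0)))))) p q [Y,X,Y,Y,Y,X] = 6 * p [Y] * q [X] * q [X] * q [Y] * q [Y] * q [Y] - 6 * p [X] * q [X] * q [Y] * q [Y] * q [Y] * q [Y]"
  by (simp add: ncom_Suc_pt[of "Suc (Suc (Suc (Suc (0))))"] ncp_mult_Cons p0 q0 vz c4_xyxyy c4_xyyyx c4_yxyxy c4_yxyyy c4_yyxyx c4_yyyxy c4_xyyyxy c4_yxyxyy c4_yxyyyx c4_yyxyxy algebra_simps)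

lemma c5_yyxyxy: "ncom (Suc (Suc (Suc (Suc (Suc (0)))))) p q [Y,Y,X,Y,X,Y] = - 15 * p [Y] * q [X] * q [X] * q [Y] * q [Y] * q [Y] + 15 * p [X] * q [X] * q [Y] * q [Y] * q [Y] * q [Y]"
  by (simp add: ncom_Suc_pt[of "Suc (Suc (Suc (Suc (0))))"] ncp_mult_Cons p0 q0 vz c4_xyxyy c4_xyyyx c4_yxyxy c4_yxyyy c4_yyxyx c4_yyyxy c4_xyyyxy c4_yxyxyy c4_yxyyyx c4_yyxyxy algebra_simps)

lemma c5_yxyyyxy: "ncom (Suc (Suc (Suc (Suc (Suc (0)))))) p q [Y,X,Y,Y,Y,X,Y] = 6 * p [Y,X] * q [X] * q [Y] * q [Y] * q [Y] * q [Y] - 6 * p [X,Y] * q [X] * q [Y] * q [Y] * q [Y] * q [Y] - 6 * p [Y] * q [X] * q [Y] * q [Y] * q [Y] * q [Y,X] + 6 * p [Y] * q [X] * q [Y] * q [Y] * q [Y] * q [X,Y]"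
  by (simp add: ncom_Suc_pt[of "Suc (Suc (Suc (Suc (0))))"] ncp_mult_Cons p0 q0 vz c4_xyxyy c4_xyyyx c4_yxyxy c4_yxyyy c4_yyxyx c4_yyyxy c4_xyyyxy c4_yxyxyy c4_yxyyyx c4_yyxyxy algebra_simps)

lemma c5_yyxyxyy: "ncom (Suc (Suc (Suc (Suc (Suc (0)))))) p q [Y,Y,X,Y,X,Y,Y] = - 15 * p [Y,X] * q [X] * q [Y] * q [Y] * q [Y] * q [Y] + 15 * p [X,Y] * q [X] * q [Y] * q [Y] * q [Y] * q [Y] + 15 * p [Y] * q [X] * q [Y] * q [Y] * q [Y] * q [Y,X] - 15 * p [Y] * q [X] * q [Y] * q [Y] * q [Y] * q [X,Y]"
  by (simp add: ncom_Suc_pt[of "Suc (Suc (Suc (Suc (0))))"] ncp_mult_Cons p0 q0 vz c4_xyxyy c4_xyyyx c4_yxyxy c4_yxyyy c4_yyxyx c4_yyyxy c4_xyyyxy c4_yxyxyy c4_yxyyyx c4_yyxyxy algebra_simps)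

end

abbreviation "five \<equiv> Suc (Suc (Suc (Suc (Suc 0))))"

lemma ncom5_Jc:
  fixes p q :: "'a::field ncpoly"
  assumes p0: "p [] = 0" and q0: "q [] = 0"
  shows "Jc (ncom five p q)"
proof -
  note c = c5_xyyyxy[of p q, OF p0 q0] c5_yxyxyy[of p q, OF p0 q0] c5_yxyyyx[of p q, OF p0 q0] c5_yyxyxy[of p q, OF p0 q0]
    c5_yxyyyxy[of p q, OF p0 q0] c5_yyxyxyy[of p q, OF p0 q0]
  have sh: "\<forall>w. good w \<and> length w \<le> 5 \<longrightarrow> ncom five p q w = 0"
    using vz[of p q, OF p0 q0] by simp
  show ?thesis unfolding Jc_def ga_def gb_def gc_def gd_def w1_def w2_def
    using sh by (simp add: c algebra_simps)
qed

lemma lie_part: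
  assumes two: "(2::'a::field) \<noteq> 0"
  shows "lie_engel (B1 :: ('a \<times> 'a ncpoly) set ring) 5"
  unfolding lie_engel_def
proof (intro ballI)
  fix u v :: "('a \<times> 'a ncpoly) set"
  assume "u \<in> carrier B1" "v \<in> carrier B1"
  then obtain a p b q where p: "p \<in> free_alg" and q: "q \<in> free_alg" and u: "u = cls (a, p)" and v: "v = cls (b, q)"
    by (metis carrierE)
  have p0: "p [] = 0" and q0: "q [] = 0" using p q by (simp_all add: free_alg_iff)
  have "lie_iter B1 5 u v = cls (0, ncom five p q)"
    using B1_lie_iter[OF p q, of "Suc (Suc (Suc (Suc 0)))" a b] by (simp add: u v numeral_eq_Suc)
  also have "\<dots> = cls (0, \<lambda>w. 0)"
  proof (rule cls_eqI)
    have f: "ncom five p q \<in> free_alg" using p q by (rule ncom_free)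
    have "ncom five p q \<in> I_ideal" using I_iff[OF two] f ncom5_Jc[of p q, OF p0 q0] by blast
    then show "((0::'a, ncom five p q), (0, \<lambda>w. 0)) \<in> hull_rel"
      using f by (simp add: hull_rel_iff reps_iff free_alg_zero)
  qed
  also have "\<dots> = \<zero>\<^bsub>B1\<^esub>" by (simp add: B1_zero)
  finally show "lie_iter B1 5 u v = \<zero>\<^bsub>B1\<^esub>" .
qed

definition lk :: "(gen list \<times> int) list \<Rightarrow> gen list \<Rightarrow> int" where
  "lk l w = (case map_of l w of None \<Rightarrow> 0 | Some c \<Rightarrow> c)"

definition emb :: "(gen list \<times> int) list \<Rightarrow> 'a::field ncpoly" where
  "emb l = (\<lambda>w. of_int (lk l w))"

definition E :: "(gen list \<times> int) list \<Rightarrow> ('a::field \<times> 'a ncpoly) set" where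
  "E l = cls (1, emb l)"

definition iconv :: "(gen list \<Rightarrow> int) \<Rightarrow> (gen list \<Rightarrow> int) \<Rightarrow> gen list \<Rightarrow> int" where
  "iconv f g w = (\<Sum>i\<le>length w. f (take i w) * g (drop i w))"

lemma iconv_Nil: "iconv f g [] = f [] * g []"
  by (simp add: iconv_def)
lemma iconv_Cons: "iconv f g (c # w) = f [] * g (c # w) + iconv (\<lambda>u. f (c # u)) g w"
  unfolding iconv_def length_Cons by (subst sum.atMost_Suc_shift) simp

definition okl :: "(gen list \<times> int) list \<Rightarrow> bool" where
  "okl l \<longleftrightarrow> list_all (\<lambda>w. w \<noteq> []) (map fst l)"

definition chk :: "(gen list \<times> int) list \<Rightarrow> (gen list \<times> int) list \<Rightarrow> (gen list \<times> int) list \<Rightarrow> bool" where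
  "chk a b c \<longleftrightarrow> list_all (\<lambda>w. lk a w + lk b w + iconv (lk a) (lk b) w = lk c w) goodlist"

lemma lk_nz: "lk l w \<noteq> 0 \<Longrightarrow> w \<in> fst ` set l"
  unfolding lk_def by (cases "map_of l w") (auto dest: map_of_SomeD intro: rev_image_eqI)

lemma emb_free: "okl l \<Longrightarrow> (emb l :: 'a::field ncpoly) \<in> free_alg"
proof -
  assume ok: "okl l"
  have "{w. (emb l :: 'a ncpoly) w \<noteq> 0} \<subseteq> fst ` set l"
    by (auto simp: emb_def intro: lk_nz)
  moreover have "lk l [] = 0"
  proof (rule ccontr)
    assume "lk l [] \<noteq> 0"
    then have "[] \<in> fst ` set l" by (rule lk_nz)
    then show False using ok by (auto simp: okl_def list_all_iff)
  qed
  ultimately show ?thesis unfolding free_alg_iff by (auto simp: emb_def intro: finite_subset)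
qed

lemma emb_mult: "ncp_mult (emb a) (emb b) w = (of_int (iconv (lk a) (lk b) w) :: 'a::field)"
  by (simp add: ncp_mult_def emb_def iconv_def)

lemma E_carrier: "okl l \<Longrightarrow> (E l :: ('a::field \<times> 'a ncpoly) set) \<in> carrier B1"
  unfolding E_def by (rule cls_carrier) (rule emb_free)

lemma E_one: "(E [] :: ('a::field \<times> 'a ncpoly) set) = \<one>\<^bsub>B1\<^esub>"
  by (simp add: E_def B1_one emb_def lk_def)

lemma E_mult:
  assumes "okl a" "okl b" "okl c" "chk a b c"
  shows "(E a :: ('a::field \<times> 'a ncpoly) set) \<otimes>\<^bsub>B1\<^esub> E b = E c"
proof -
  have fa: "(emb a :: 'a ncpoly) \<in> free_alg" "(emb b :: 'a ncpoly) \<in> free_alg" "(emb c :: 'a ncpoly) \<in> free_alg"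
    using assms emb_free by blast+
  have "(E a :: ('a \<times> 'a ncpoly) set) \<otimes>\<^bsub>B1\<^esub> E b = cls (1 * 1, \<lambda>w. 1 * emb b w + 1 * emb a w + ncp_mult (emb a) (emb b) w)"
    unfolding E_def using fa by (simp only: B1_mult')
  also have "\<dots> = E c" unfolding E_def
  proof (rule cls_eqI)
    define D where "D = (\<lambda>w. (1 * emb b w + 1 * emb a w + ncp_mult (emb a) (emb b) w) - (emb c w :: 'a))"
    have Df: "D \<in> free_alg" unfolding D_def
    proof -
      have "(\<lambda>w. (1 * emb b w + 1 * emb a w + ncp_mult (emb a) (emb b) w) + (-1) * (emb c w :: 'a)) \<in> free_alg"
        using fa by (intro free_alg_add free_alg_smult free_alg_mult)
      then show "(\<lambda>w. (1 * emb b w + 1 * emb a w + ncp_mult (emb a) (emb b) w) - (emb c w :: 'a)) \<in> free_alg"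
        by simp
    qed
    have Dz: "D w = 0" if "good w" for w
    proof -
      have "lk a w + lk b w + iconv (lk a) (lk b) w = lk c w"
        using assms(4) that by (simp add: chk_def list_all_iff good_iff)
      then have "(of_int (lk a w + lk b w + iconv (lk a) (lk b) w) :: 'a) = of_int (lk c w)" by simp
      then show ?thesis unfolding D_def emb_mult by (simp add: emb_def algebra_simps)
    qed
    have "D \<in> I_ideal" by (rule vanish_I[OF Df Dz])
    then show "((1 * 1, \<lambda>w. 1 * emb b w + 1 * emb a w + ncp_mult (emb a) (emb b) w), (1::'a, emb c)) \<in> hull_rel"
      using fa Df fa_mult_lin[of "emb a" "emb b" 1 1] unfolding D_def by (simp add: hull_rel_iff reps_iff)
  qed
  finally show ?thesis .
qed

lemma E_units:
  assumes "okl a" "okl b" "chk a b []" "chk b a []"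
  shows "(E a :: ('a::field \<times> 'a ncpoly) set) \<in> Units B1"
    "inv\<^bsub>units_of B1\<^esub> (E a :: ('a::field \<times> 'a ncpoly) set) = E b"
proof -
  interpret R: ring "B1 :: ('a \<times> 'a ncpoly) set ring" by (rule ring_B1)
  have ok0: "okl []" by (simp add: okl_def)
  have c: "(E a :: ('a \<times> 'a ncpoly) set) \<in> carrier B1" "(E b :: ('a \<times> 'a ncpoly) set) \<in> carrier B1"
    using assms E_carrier by blast+
  have m1: "(E a :: ('a \<times> 'a ncpoly) set) \<otimes>\<^bsub>B1\<^esub> E b = \<one>\<^bsub>B1\<^esub>"
    using E_mult[OF assms(1,2) ok0 assms(3)] by (simp add: E_one)
  have m2: "(E b :: ('a \<times> 'a ncpoly) set) \<otimes>\<^bsub>B1\<^esub> E a = \<one>\<^bsub>B1\<^esub>"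
    using E_mult[OF assms(2,1) ok0 assms(4)] by (simp add: E_one)
  note m = m1 m2
  show u: "(E a :: ('a \<times> 'a ncpoly) set) \<in> Units B1"
    unfolding Units_def using c m by blast
  have "inv\<^bsub>B1\<^esub> (E a :: ('a \<times> 'a ncpoly) set) = E b" using R.inv_char c m by blast
  then show "inv\<^bsub>units_of B1\<^esub> (E a :: ('a::field \<times> 'a ncpoly) set) = E b"
    using R.units_of_inv[OF u] by simp
qed

lemma comm_step:
  assumes "okl g" "okl gi" "okl vv" "okl vi" "okl t1" "okl t2" "okl g2"
    "chk g gi []" "chk gi g []" "chk vv vi []" "chk vi vv []"
    "chk gi vi t1" "chk t1 g t2" "chk t2 vv g2"
  shows "grp_comm (units_of B1) (E g :: ('a::field \<times> 'a ncpoly) set) (E vv) = E g2"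
proof -
  have i1: "inv\<^bsub>units_of B1\<^esub> (E g :: ('a \<times> 'a ncpoly) set) = E gi" using E_units assms by blast
  have i2: "inv\<^bsub>units_of B1\<^esub> (E vv :: ('a \<times> 'a ncpoly) set) = E vi" using E_units assms by blast
  show ?thesis unfolding grp_comm_def i1 i2 units_of_mult
    using E_mult assms by metis
qed

definition "tv = [([Y], 1)]"
definition "tvi = [([Y], -1), ([Y,Y], 1), ([Y,Y,Y], -1)]"
definition "g0 = [([X], 1)]"
definition "gi0 = [([X], -1)]"
definition "t10 = [([X], -1), ([Y], -1), ([X,Y], 1), ([Y,Y], 1), ([X,Y,Y], -1), ([Y,Y,Y], -1), ([X,Y,Y,Y], 1)]"
definition "t20 = [([Y], -1), ([X,Y], 1), ([Y,X], -1), ([Y,Y], 1), ([X,Y,X], 1), ([X,Y,Y], -1), ([Y,Y,X], 1), ([Y,Y,Y], -1), ([X,Y,Y,Y], 1), ([Y,Y,Y,X], -1), ([X,Y,Y,Y,X], 1)]"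
definition "g1 = [([X,Y], 1), ([Y,X], -1), ([X,Y,X], 1), ([Y,X,Y], -1), ([Y,Y,X], 1), ([X,Y,X,Y], 1), ([Y,Y,X,Y], 1), ([Y,Y,Y,X], -1), ([X,Y,Y,Y,X], 1), ([Y,Y,Y,X,Y], -1), ([X,Y,Y,Y,X,Y], 1)]"
definition "gi1 = [([X,Y], -1), ([Y,X], 1), ([X,Y,X], -1), ([Y,X,Y], 1), ([Y,Y,X], -1), ([Y,X,Y,X], 1), ([Y,Y,X,Y], -1), ([Y,Y,Y,X], 1), ([Y,Y,X,Y,X], -1), ([Y,Y,Y,X,Y], 1)]"
definition "t11 = [([Y], -1), ([X,Y], -1), ([Y,X], 1), ([Y,Y], 1), ([X,Y,X], -1), ([X,Y,Y], 1), ([Y,Y,X], -1), ([Y,Y,Y], -1), ([X,Y,X,Y], 1), ([X,Y,Y,Y], -1), ([Y,X,Y,X], 1), ([Y,Y,Y,X], 1), ([X,Y,X,Y,Y], -1), ([Y,X,Y,X,Y], -1), ([Y,Y,X,Y,X], -1), ([Y,X,Y,X,Y,Y], 1), ([Y,Y,X,Y,X,Y], 1), ([Y,Y,X,Y,X,Y,Y], -1)]"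
definition "t21 = [([Y], -1), ([Y,Y], 1), ([X,Y,Y], 1), ([Y,X,Y], -2), ([Y,Y,X], 1), ([Y,Y,Y], -1), ([X,Y,X,Y], 1), ([X,Y,Y,Y], -1), ([Y,X,Y,X], -1), ([Y,Y,X,Y], 3), ([Y,Y,Y,X], -2), ([X,Y,X,Y,Y], -1), ([X,Y,Y,Y,X], -1), ([Y,X,Y,X,Y], -3), ([Y,Y,X,Y,X], 1), ([Y,Y,Y,X,Y], -4), ([X,Y,Y,Y,X,Y], -2), ([Y,X,Y,X,Y,Y], 1), ([Y,X,Y,Y,Y,X], -2), ([Y,Y,X,Y,X,Y], 3), ([Y,X,Y,Y,Y,X,Y], -2), ([Y,Y,X,Y,X,Y,Y], -1)]"
definition "g2 = [([X,Y,Y], 1), ([Y,X,Y], -2), ([Y,Y,X], 1), ([X,Y,X,Y], 1), ([Y,X,Y,X], -1), ([Y,X,Y,Y], -2), ([Y,Y,X,Y], 4), ([Y,Y,Y,X], -2), ([X,Y,Y,Y,X], -1), ([Y,X,Y,X,Y], -4), ([Y,Y,X,Y,X], 1), ([Y,Y,Y,X,Y], -6), ([X,Y,Y,Y,X,Y], -3), ([Y,X,Y,X,Y,Y], -2), ([Y,X,Y,Y,Y,X], -2), ([Y,Y,X,Y,X,Y], 4), ([Y,X,Y,Y,Y,X,Y], -4), ([Y,Y,X,Y,X,Y,Y], 2)]"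
definition "gi2 = [([X,Y,Y], -1), ([Y,X,Y], 2), ([Y,Y,X], -1), ([X,Y,X,Y], -1), ([Y,X,Y,X], 1), ([Y,X,Y,Y], 2), ([Y,Y,X,Y], -4), ([Y,Y,Y,X], 2), ([X,Y,Y,Y,X], 1), ([Y,X,Y,X,Y], 4), ([Y,Y,X,Y,X], -1), ([Y,Y,Y,X,Y], 6), ([X,Y,Y,Y,X,Y], 1), ([Y,Y,X,Y,X,Y], -6)]"
definition "t12 = [([Y], -1), ([Y,Y], 1), ([X,Y,Y], -1), ([Y,X,Y], 2), ([Y,Y,X], -1), ([Y,Y,Y], -1), ([X,Y,X,Y], -1), ([X,Y,Y,Y], 1), ([Y,X,Y,X], 1), ([Y,Y,X,Y], -3), ([Y,Y,Y,X], 2), ([X,Y,X,Y,Y], 1), ([X,Y,Y,Y,X], 1), ([Y,X,Y,X,Y], 3), ([Y,Y,X,Y,X], -1), ([Y,Y,Y,X,Y], 4), ([Y,X,Y,X,Y,Y], -3), ([Y,Y,X,Y,X,Y], -5), ([Y,Y,X,Y,X,Y,Y], 5)]"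
definition "t22 = [([Y], -1), ([Y,Y], 1), ([Y,Y,Y], -1), ([X,Y,Y,Y], 1), ([Y,X,Y,Y], -3), ([Y,Y,X,Y], 3), ([Y,Y,Y,X], -1), ([X,Y,X,Y,Y], 1), ([Y,X,Y,X,Y], -2), ([Y,Y,X,Y,X], 1), ([Y,Y,Y,X,Y], -8), ([X,Y,Y,Y,X,Y], -1), ([Y,X,Y,X,Y,Y], -3), ([Y,X,Y,Y,Y,X], 1), ([Y,Y,X,Y,X,Y], 6), ([Y,X,Y,Y,Y,X,Y], 7), ([Y,Y,X,Y,X,Y,Y], 8)]"
definition "g3 = [([X,Y,Y,Y], 1), ([Y,X,Y,Y], -3), ([Y,Y,X,Y], 3), ([Y,Y,Y,X], -1), ([X,Y,X,Y,Y], 1), ([Y,X,Y,X,Y], -2), ([Y,X,Y,Y,Y], -3), ([Y,Y,X,Y,X], 1), ([Y,Y,Y,X,Y], -9), ([X,Y,Y,Y,X,Y], -1), ([Y,X,Y,X,Y,Y], -5), ([Y,X,Y,Y,Y,X], 1), ([Y,Y,X,Y,X,Y], 7), ([Y,X,Y,Y,Y,X,Y], 8), ([Y,Y,X,Y,X,Y,Y], 14)]"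
definition "gi3 = [([X,Y,Y,Y], -1), ([Y,X,Y,Y], 3), ([Y,Y,X,Y], -3), ([Y,Y,Y,X], 1), ([X,Y,X,Y,Y], -1), ([Y,X,Y,X,Y], 2), ([Y,X,Y,Y,Y], 3), ([Y,Y,X,Y,X], -1), ([Y,Y,Y,X,Y], 9), ([X,Y,Y,Y,X,Y], 1), ([Y,X,Y,X,Y,Y], 5), ([Y,X,Y,Y,Y,X], -1), ([Y,Y,X,Y,X,Y], -7), ([Y,X,Y,Y,Y,X,Y], -8), ([Y,Y,X,Y,X,Y,Y], -14)]"
definition "t13 = [([Y], -1), ([Y,Y], 1), ([Y,Y,Y], -1), ([X,Y,Y,Y], -1), ([Y,X,Y,Y], 3), ([Y,Y,X,Y], -3), ([Y,Y,Y,X], 1), ([X,Y,X,Y,Y], -1), ([Y,X,Y,X,Y], 2), ([Y,Y,X,Y,X], -1), ([Y,Y,Y,X,Y], 8), ([X,Y,Y,Y,X,Y], 1), ([Y,X,Y,X,Y,Y], 3), ([Y,X,Y,Y,Y,X], -1), ([Y,Y,X,Y,X,Y], -6), ([Y,X,Y,Y,Y,X,Y], -7), ([Y,Y,X,Y,X,Y,Y], -8)]"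
definition "t23 = [([Y], -1), ([Y,Y], 1), ([Y,Y,Y], -1), ([Y,X,Y,Y,Y], -4), ([Y,Y,Y,X,Y], -4), ([Y,X,Y,X,Y,Y], -3), ([Y,Y,X,Y,X,Y], 3), ([Y,X,Y,Y,Y,X,Y], 2), ([Y,Y,X,Y,X,Y,Y], 12)]"
definition "g4 = [([Y,X,Y,Y,Y], -4), ([Y,Y,Y,X,Y], -4), ([Y,X,Y,X,Y,Y], -3), ([Y,Y,X,Y,X,Y], 3), ([Y,X,Y,Y,Y,X,Y], 2), ([Y,Y,X,Y,X,Y,Y], 15)]"
definition "gi4 = [([Y,X,Y,Y,Y], 4), ([Y,Y,Y,X,Y], 4), ([Y,X,Y,X,Y,Y], 3), ([Y,Y,X,Y,X,Y], -3), ([Y,X,Y,Y,Y,X,Y], -2), ([Y,Y,X,Y,X,Y,Y], -15)]"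
definition "t14 = [([Y], -1), ([Y,Y], 1), ([Y,Y,Y], -1), ([Y,X,Y,Y,Y], 4), ([Y,Y,Y,X,Y], 4), ([Y,X,Y,X,Y,Y], 3), ([Y,Y,X,Y,X,Y], -3), ([Y,X,Y,Y,Y,X,Y], -2), ([Y,Y,X,Y,X,Y,Y], -12)]"
definition "t24 = [([Y], -1), ([Y,Y], 1), ([Y,Y,Y], -1), ([Y,Y,X,Y,X,Y,Y], 6)]"
definition "g5 = [([Y,Y,X,Y,X,Y,Y], 6)]"
lemmas tdefs = tv_def tvi_def g0_def gi0_def t10_def t20_def g1_def gi1_def t11_def t21_def g2_def gi2_def t12_def t22_def g3_def gi3_def t13_def t23_def g4_def gi4_def t14_def t24_def g5_def
lemma vinv: "chk tv tvi []" "chk tvi tv []" by (simp add: chk_def goodlist_def lk_def iconv_Cons iconv_Nil tv_def tvi_def)+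
lemma step0: "grp_comm (units_of B1) (E g0 :: ('a::field \<times> 'a ncpoly) set) (E tv) = E g1"
proof (rule comm_step)
  show "okl g0" "okl gi0" "okl tv" "okl tvi" "okl t10" "okl t20" "okl g1" by (simp_all add: okl_def tdefs)
  show "chk tv tvi []" "chk tvi tv []" by (rule vinv(1), rule vinv(2))
  show "chk g0 gi0 []" by (simp add: chk_def goodlist_def lk_def iconv_Cons iconv_Nil g0_def gi0_def)
  show "chk gi0 g0 []" by (simp add: chk_def goodlist_def lk_def iconv_Cons iconv_Nil g0_def gi0_def)
  show "chk gi0 tvi t10" by (simp add: chk_def goodlist_def lk_def iconv_Cons iconv_Nil gi0_def tvi_def t10_def)
  show "chk t10 g0 t20" by (simp add: chk_def goodlist_def lk_def iconv_Cons iconv_Nil t10_def g0_def t20_def)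
  show "chk t20 tv g1" by (simp add: chk_def goodlist_def lk_def iconv_Cons iconv_Nil t20_def tv_def g1_def)
qed

lemma step1: "grp_comm (units_of B1) (E g1 :: ('a::field \<times> 'a ncpoly) set) (E tv) = E g2"
proof (rule comm_step)
  show "okl g1" "okl gi1" "okl tv" "okl tvi" "okl t11" "okl t21" "okl g2" by (simp_all add: okl_def tdefs)
  show "chk tv tvi []" "chk tvi tv []" by (rule vinv(1), rule vinv(2))
  show "chk g1 gi1 []" by (simp add: chk_def goodlist_def lk_def iconv_Cons iconv_Nil g1_def gi1_def)
  show "chk gi1 g1 []" by (simp add: chk_def goodlist_def lk_def iconv_Cons iconv_Nil g1_def gi1_def)
  show "chk gi1 tvi t11" by (simp add: chk_def goodlist_def lk_def iconv_Cons iconv_Nil gi1_def tvi_def t11_def)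
  show "chk t11 g1 t21" by (simp add: chk_def goodlist_def lk_def iconv_Cons iconv_Nil t11_def g1_def t21_def)
  show "chk t21 tv g2" by (simp add: chk_def goodlist_def lk_def iconv_Cons iconv_Nil t21_def tv_def g2_def)
qed

lemma step2: "grp_comm (units_of B1) (E g2 :: ('a::field \<times> 'a ncpoly) set) (E tv) = E g3"
proof (rule comm_step)
  show "okl g2" "okl gi2" "okl tv" "okl tvi" "okl t12" "okl t22" "okl g3" by (simp_all add: okl_def tdefs)
  show "chk tv tvi []" "chk tvi tv []" by (rule vinv(1), rule vinv(2))
  show "chk g2 gi2 []" by (simp add: chk_def goodlist_def lk_def iconv_Cons iconv_Nil g2_def gi2_def)
  show "chk gi2 g2 []" by (simp add: chk_def goodlist_def lk_def iconv_Cons iconv_Nil g2_def gi2_def)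
  show "chk gi2 tvi t12" by (simp add: chk_def goodlist_def lk_def iconv_Cons iconv_Nil gi2_def tvi_def t12_def)
  show "chk t12 g2 t22" by (simp add: chk_def goodlist_def lk_def iconv_Cons iconv_Nil t12_def g2_def t22_def)
  show "chk t22 tv g3" by (simp add: chk_def goodlist_def lk_def iconv_Cons iconv_Nil t22_def tv_def g3_def)
qed

lemma step3: "grp_comm (units_of B1) (E g3 :: ('a::field \<times> 'a ncpoly) set) (E tv) = E g4"
proof (rule comm_step)
  show "okl g3" "okl gi3" "okl tv" "okl tvi" "okl t13" "okl t23" "okl g4" by (simp_all add: okl_def tdefs)
  show "chk tv tvi []" "chk tvi tv []" by (rule vinv(1), rule vinv(2))
  show "chk g3 gi3 []" by (simp add: chk_def goodlist_def lk_def iconv_Cons iconv_Nil g3_def gi3_def)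
  show "chk gi3 g3 []" by (simp add: chk_def goodlist_def lk_def iconv_Cons iconv_Nil g3_def gi3_def)
  show "chk gi3 tvi t13" by (simp add: chk_def goodlist_def lk_def iconv_Cons iconv_Nil gi3_def tvi_def t13_def)
  show "chk t13 g3 t23" by (simp add: chk_def goodlist_def lk_def iconv_Cons iconv_Nil t13_def g3_def t23_def)
  show "chk t23 tv g4" by (simp add: chk_def goodlist_def lk_def iconv_Cons iconv_Nil t23_def tv_def g4_def)
qed

lemma step4: "grp_comm (units_of B1) (E g4 :: ('a::field \<times> 'a ncpoly) set) (E tv) = E g5"
proof (rule comm_step)
  show "okl g4" "okl gi4" "okl tv" "okl tvi" "okl t14" "okl t24" "okl g5" by (simp_all add: okl_def tdefs)
  show "chk tv tvi []" "chk tvi tv []" by (rule vinv(1), rule vinv(2))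
  show "chk g4 gi4 []" by (simp add: chk_def goodlist_def lk_def iconv_Cons iconv_Nil g4_def gi4_def)
  show "chk gi4 g4 []" by (simp add: chk_def goodlist_def lk_def iconv_Cons iconv_Nil g4_def gi4_def)
  show "chk gi4 tvi t14" by (simp add: chk_def goodlist_def lk_def iconv_Cons iconv_Nil gi4_def tvi_def t14_def)
  show "chk t14 g4 t24" by (simp add: chk_def goodlist_def lk_def iconv_Cons iconv_Nil t14_def g4_def t24_def)
  show "chk t24 tv g5" by (simp add: chk_def goodlist_def lk_def iconv_Cons iconv_Nil t24_def tv_def g5_def)
qed

lemma t_c0: "chk g0 gi0 []" "chk gi0 g0 []"
    by (simp_all add: chk_def goodlist_def lk_def iconv_Cons iconv_Nil g0_def gi0_def)

lemma t_ok0: "okl g0" "okl gi0" "okl tv" "okl tvi" by (simp_all add: okl_def g0_def gi0_def tv_def tvi_def)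

lemma t_uU: "(E g0 :: ('a::field \<times> 'a ncpoly) set) \<in> carrier (units_of B1)"
  using E_units(1)[OF t_ok0(1,2) t_c0] by (simp add: units_of_carrier)

lemma t_vU: "(E tv :: ('a::field \<times> 'a ncpoly) set) \<in> carrier (units_of B1)"
  using E_units(1)[OF t_ok0(3,4) vinv] by (simp add: units_of_carrier)

lemma t_iter: "grp_comm_iter (units_of B1) 5 (E g0 :: ('a::field \<times> 'a ncpoly) set) (E tv) = E g5"
proof -
  have "(5::nat) = Suc (Suc (Suc (Suc (Suc 0))))" by simp
  then show ?thesis by (simp only: grp_comm_iter.simps step0 step1 step2 step3 step4)
qed

lemma t_ok: "okl g5" "okl []" by (simp_all add: okl_def g5_def)

lemma t_neq:
  assumes two: "(2::'a::field) \<noteq> 0" and three: "(3::'a) \<noteq> 0"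
  shows "(E g5 :: ('a \<times> 'a ncpoly) set) \<noteq> E []"
proof
  assume eq: "(E g5 :: ('a \<times> 'a ncpoly) set) = E []"
  have r: "(1::'a, emb g5) \<in> hull_reps" "(1::'a, emb []) \<in> hull_reps"
    using emb_free[OF t_ok(1)] emb_free[OF t_ok(2)] by (simp_all add: reps_iff)
  have "((1::'a, emb g5), (1::'a, emb [])) \<in> hull_rel"
    using cls_eq_iff[OF r, THEN iffD1] eq unfolding E_def .
  note hr = hull_rel_iff[THEN iffD1, THEN conjunct2, THEN conjunct2, THEN conjunct2, OF this]
  then have "(\<lambda>w. emb g5 w - (emb [] w :: 'a)) \<in> I_ideal"
    by (simp only: snd_conv)
  then have "Jc (\<lambda>w. emb g5 w - (emb [] w :: 'a))" by (rule conjunct2[OF I_Jc])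
  then have "5 * (emb g5 w1 - emb [] w1) + 2 * (emb g5 w2 - (emb [] w2 :: 'a)) = 0" by (rule Jc_parts(5))
  moreover have "5 * (emb g5 w1 - emb [] w1) + 2 * (emb g5 w2 - (emb [] w2 :: 'a::field)) = 12"
    by (simp add: emb_def lk_def g5_def w1_def w2_def)
  ultimately have z: "(12::'a) = 0" by simp
  have "(2::'a) * (2 * 3) = 0" using z by simp
  then show False using two three by (metis mult_eq_0_iff)
qed


lemma group_part:
  assumes two: "(2::'a::field) \<noteq> 0" and three: "(3::'a) \<noteq> 0"
  shows "\<not> group_engel (units_of (B1 :: ('a \<times> 'a ncpoly) set ring)) 5"
proof
  assume ge: "group_engel (units_of (B1 :: ('a \<times> 'a ncpoly) set ring)) 5"
  have "grp_comm_iter (units_of B1) 5 (E g0 :: ('a \<times> 'a ncpoly) set) (E tv) = \<one>\<^bsub>units_of B1\<^esub>"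
    using ge[unfolded group_engel_def, rule_format, OF t_uU t_vU] .
  then have "(E g5 :: ('a \<times> 'a ncpoly) set) = E []"
    unfolding t_iter units_of_one E_one .
  then show False using t_neq[OF two three] by blast
qed

theorem corollary1p3:
  assumes "(2::'a::field) \<noteq> 0" and "(3::'a) \<noteq> 0"
  shows "lie_engel (B1 :: ('a \<times> 'a ncpoly) set ring) 5
         \<and> \<not> group_engel (units_of (B1 :: ('a \<times> 'a ncpoly) set ring)) 5"
  using lie_part[OF assms(1)] group_part[OF assms] by blast


end
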